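(* Let $n,k,d$ be positive integers such that $k^{1/d}$ is an integer. Then $\textsc{sub-pmm}_{n,k}$ is solvable by monotone formulas of size at most $k n^{d k^{1/d}}$ of each of the following types: (I) $\Sigma_{2d}$ formulas with $\bigwedge$-fan-in $k^{1/d}$ (and $\bigvee$-fan-in $n^{k^{1/d}}$); (II) $\Sigma_{d+1}$ formulas, and also $\Pi_{d+1}$ formulas (with fan-in $k^{1/d}n^{k^{1/d}}$).
   Context: An $AC^0$ formula on variables $X_1,\dots,X_N$ is a rooted tree whose leaves are labeled by a constant $0$ or $1$ or a literal $X_i$ or $\neg X_i$ and whose non-leaves (gates) are labeled by $\bigwedge$ or $\bigvee$ (unbounded fan-in). It is monotone if no leaf is labeled $\neg X_i$. Size is the number of leaves labeled by literals; depth is the maximum number of gates on a root-to-leaf path; fan-in (resp. $\bigwedge$-fan-in, $\bigvee$-fan-in) is the maximum number of children of any gate (resp. $\bigwedge$-gate, $\bigvee$-gate). Depth-$0$ formulas (literals) are both $\Sigma_0$ and $\Pi_0$ formulas. For $d\ge1$, a $\Sigma_d$ formula (resp. $\Pi_d$ formula) is either a $\Pi_{d-1}$ formula (resp. $\Sigma_{d-1}$ formula) or a depth-$d$ formula whose output gate is labeled $\bigvee$ (resp. $\bigwedge$). $\textsc{sub-pmm}_{n,k}$: the input is $k$ Boolean matrices $M^{(1)},\dots,M^{(k)}\in\{0,1\}^{n\times n}$ ($kn^2$ variables). A sub-permutation matrix is a $0/1$ matrix with at most one $1$ in each row and column. A formula solves $\textsc{sub-pmm}_{n,k}$ if on every input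 where all $M^{(i)}$ are sub-permutation matrices it outputs $\bigvee_{a_1,\dots,a_{k-1}\in[n]} M^{(1)}_{1,a_1}\wedge M^{(2)}_{a_1,a_2}\wedge\cdots\wedge M^{(k)}_{a_{k-1},1}$. *)

theory Defs
  imports Main
begin

text \<open>AC0 formulas: rooted trees. Leaves are constants or literals (Lit True v = X_v,
  Lit False v = negated X_v); gates are unbounded fan-in AND / OR, children given as a list.\<close>

datatype 'v ac0 = Const bool | Lit bool 'v | And "'v ac0 list" | Or "'v ac0 list"

fun eval :: "('v \<Rightarrow> bool) \<Rightarrow> 'v ac0 \<Rightarrow> bool" where
  "eval \<rho> (Const b) = b"
| "eval \<rho> (Lit p v) = (if p then \<rho> v else \<not> \<rho> v)"
| "eval \<rho> (And fs) = (\<forall>f\<in>set fs. eval \<rho> f)"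
| "eval \<rho> (Or fs) = (\<exists>f\<in>set fs. eval \<rho> f)"

fun vars :: "'v ac0 \<Rightarrow> 'v set" where
  "vars (Const b) = {}"
| "vars (Lit p v) = {v}"
| "vars (And fs) = (\<Union>f\<in>set fs. vars f)"
| "vars (Or fs) = (\<Union>f\<in>set fs. vars f)"

fun monotone_ac0 :: "'v ac0 \<Rightarrow> bool" where
  "monotone_ac0 (Const b) = True"
| "monotone_ac0 (Lit p v) = p"
| "monotone_ac0 (And fs) = (\<forall>f\<in>set fs. monotone_ac0 f)"
| "monotone_ac0 (Or fs) = (\<forall>f\<in>set fs. monotone_ac0 f)"

fun fsize :: "'v ac0 \<Rightarrow> nat" where
  "fsize (Const b) = 0"
| "fsize (Lit p v) = 1"
| "fsize (And fs) = sum_list (map fsize fs)"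
| "fsize (Or fs) = sum_list (map fsize fs)"

fun depth :: "'v ac0 \<Rightarrow> nat" where
  "depth (Const b) = 0"
| "depth (Lit p v) = 0"
| "depth (And fs) = Suc (fold max (map depth fs) 0)"
| "depth (Or fs) = Suc (fold max (map depth fs) 0)"

fun and_fanin :: "'v ac0 \<Rightarrow> nat" where
  "and_fanin (Const b) = 0"
| "and_fanin (Lit p v) = 0"
| "and_fanin (And fs) = fold max (map and_fanin fs) (length fs)"
| "and_fanin (Or fs) = fold max (map and_fanin fs) 0"

fun or_fanin :: "'v ac0 \<Rightarrow> nat" where
  "or_fanin (Const b) = 0"
| "or_fanin (Lit p v) = 0"
| "or_fanin (And fs) = fold max (map or_fanin fs) 0"
| "or_fanin (Or fs) = fold max (map or_fanin fs) (length fs)"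

definition fanin :: "'v ac0 \<Rightarrow> nat" where
  "fanin F = max (and_fanin F) (or_fanin F)"

fun is_Or :: "'v ac0 \<Rightarrow> bool" where
  "is_Or (Or fs) = True"
| "is_Or _ = False"

fun is_And :: "'v ac0 \<Rightarrow> bool" where
  "is_And (And fs) = True"
| "is_And _ = False"

fun is_Sigma :: "nat \<Rightarrow> 'v ac0 \<Rightarrow> bool" and is_Pi :: "nat \<Rightarrow> 'v ac0 \<Rightarrow> bool" where
  "is_Sigma 0 F = (depth F = 0)"
| "is_Pi 0 F = (depth F = 0)"
| "is_Sigma (Suc d) F = (is_Pi d F \<or> (depth F = Suc d \<and> is_Or F))"
| "is_Pi (Suc d) F = (is_Sigma d F \<or> (depth F = Suc d \<and> is_And F))"

text \<open>SUB-PMM_{n,k}. Variable (i, a, b) stands for M^(i)_{a,b}, 1 <= i <= k, 1 <= a,b <= n.\<close>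
type_synonym pvar = "nat \<times> nat \<times> nat"

definition pmm_vars :: "nat \<Rightarrow> nat \<Rightarrow> pvar set" where
  "pmm_vars n k = {1..k} \<times> {1..n} \<times> {1..n}"

definition sub_perm_input :: "nat \<Rightarrow> nat \<Rightarrow> (pvar \<Rightarrow> bool) \<Rightarrow> bool" where
  "sub_perm_input n k \<rho> \<longleftrightarrow>
     (\<forall>i\<in>{1..k}. \<forall>a\<in>{1..n}. \<forall>b\<in>{1..n}. \<forall>c\<in>{1..n}.
        (\<rho> (i, a, b) \<and> \<rho> (i, a, c) \<longrightarrow> b = c) \<and>
        (\<rho> (i, b, a) \<and> \<rho> (i, c, a) \<longrightarrow> b = c))"

definition pmm_value :: "nat \<Rightarrow> nat \<Rightarrow> (pvar \<Rightarrow> bool) \<Rightarrow> bool" where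
  "pmm_value n k \<rho> \<longleftrightarrow>
     (\<exists>a :: nat \<Rightarrow> nat. a 0 = 1 \<and> a k = 1 \<and> (\<forall>j\<in>{1..<k}. a j \<in> {1..n}) \<and>
        (\<forall>i\<in>{1..k}. \<rho> (i, a (i - 1), a i)))"

definition solves_sub_pmm :: "nat \<Rightarrow> nat \<Rightarrow> pvar ac0 \<Rightarrow> bool" where
  "solves_sub_pmm n k F \<longleftrightarrow> vars F \<subseteq> pmm_vars n k \<and>
     (\<forall>\<rho>. sub_perm_input n k \<rho> \<longrightarrow> eval \<rho> F = pmm_value n k \<rho>)"

end

theory Submission
  imports Defs
begin

lemma fold_max_le[simp]: "fold max xs z \<le> (B::nat) \<longleftrightarrow> z \<le> B \<and> (\<forall>x\<in>set xs. x \<le> B)"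
  by (induction xs arbitrary: z) auto

lemma depth_And_le[simp]: "depth (And fs) \<le> Suc D \<longleftrightarrow> (\<forall>f\<in>set fs. depth f \<le> D)"
  by (simp add: fold_max_le)
lemma depth_Or_le[simp]: "depth (Or fs) \<le> Suc D \<longleftrightarrow> (\<forall>f\<in>set fs. depth f \<le> D)"
  by (simp add: fold_max_le)
lemma and_fanin_And_le[simp]: "and_fanin (And fs) \<le> B \<longleftrightarrow> length fs \<le> B \<and> (\<forall>f\<in>set fs. and_fanin f \<le> B)"
  by (simp add: fold_max_le)
lemma and_fanin_Or_le[simp]: "and_fanin (Or fs) \<le> B \<longleftrightarrow> (\<forall>f\<in>set fs. and_fanin f \<le> B)"
  by (simp add: fold_max_le)
lemma or_fanin_Or_le[simp]: "or_fanin (Or fs) \<le> B \<longleftrightarrow> length fs \<le> B \<and> (\<forall>f\<in>set fs. or_fanin f \<le> B)"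
  by (simp add: fold_max_le)
lemma or_fanin_And_le[simp]: "or_fanin (And fs) \<le> B \<longleftrightarrow> (\<forall>f\<in>set fs. or_fanin f \<le> B)"
  by (simp add: fold_max_le)

definition chain :: "nat \<Rightarrow> nat \<Rightarrow> (nat \<Rightarrow> nat \<Rightarrow> nat \<Rightarrow> bool) \<Rightarrow> nat \<Rightarrow> nat \<Rightarrow> bool" where
  "chain n L R a b \<longleftrightarrow> (\<exists>p. p 0 = a \<and> p L = b \<and> (\<forall>i\<in>{1..<L}. p i \<in> {1..n}) \<and>
      (\<forall>i\<in>{1..L}. R i (p (i - 1)) (p i)))"

lemma chain_one: "chain n 1 R a b \<longleftrightarrow> R 1 a b"
proof
  assume "chain n 1 R a b" then show "R 1 a b" unfolding chain_def by auto
next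
  assume "R 1 a b" then show "chain n 1 R a b" unfolding chain_def
    by (intro exI[of _ "\<lambda>i. if i = 0 then a else b"]) auto
qed

lemma chain_split:
  assumes "L1 \<ge> 1" "L2 \<ge> 1"
  shows "chain n (L1 + L2) R a b \<longleftrightarrow> (\<exists>c\<in>{1..n}. chain n L1 R a c \<and> chain n L2 (\<lambda>i. R (L1 + i)) c b)"
proof
  assume "chain n (L1 + L2) R a b"
  then obtain p where p: "p 0 = a" "p (L1+L2) = b" "\<forall>i\<in>{1..<L1+L2}. p i \<in> {1..n}"
    "\<forall>i\<in>{1..L1+L2}. R i (p (i - 1)) (p i)" unfolding chain_def by blast
  have c: "p L1 \<in> {1..n}" using p(3) assms by auto
  have 1: "chain n L1 R a (p L1)" unfolding chain_def
    by (rule exI[of _ p]) (use p in auto)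
  have 2: "chain n L2 (\<lambda>i. R (L1 + i)) (p L1) b" unfolding chain_def
  proof (rule exI[of _ "\<lambda>i. p (L1 + i)"], intro conjI ballI)
    fix i assume "i \<in> {1..L2}"
    then show "R (L1 + i) (p (L1 + (i - 1))) (p (L1 + i))" using p(4)[rule_format, of "L1+i"]
      by (auto simp: Suc_diff_le)
  qed (use p in auto)
  show "\<exists>c\<in>{1..n}. chain n L1 R a c \<and> chain n L2 (\<lambda>i. R (L1 + i)) c b"
    using c 1 2 by blast
next
  assume "\<exists>c\<in>{1..n}. chain n L1 R a c \<and> chain n L2 (\<lambda>i. R (L1 + i)) c b"
  then obtain c p q where c: "c \<in> {1..n}" and p: "p 0 = a" "p L1 = c" "\<forall>i\<in>{1..<L1}. p i \<in> {1..n}"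
    "\<forall>i\<in>{1..L1}. R i (p (i - 1)) (p i)" and q: "q 0 = c" "q L2 = b" "\<forall>i\<in>{1..<L2}. q i \<in> {1..n}"
    "\<forall>i\<in>{1..L2}. R (L1 + i) (q (i - 1)) (q i)" unfolding chain_def by blast
  define r where "r i = (if i \<le> L1 then p i else q (i - L1))" for i
  show "chain n (L1 + L2) R a b" unfolding chain_def
  proof (rule exI[of _ r], intro conjI ballI)
    show "r 0 = a" using p by (simp add: r_def)
    show "r (L1 + L2) = b" using q assms by (simp add: r_def)
  next
    fix i assume i: "i \<in> {1..<L1 + L2}"
    show "r i \<in> {1..n}"
    proof (cases "i < L1")
      case True then show ?thesis using p i by (auto simp: r_def)
    next
      case False
      show ?thesis
      proof (cases "i = L1")
        case True then show ?thesis using p c by (simp add: r_def)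
      next
        case False
        have "i - L1 \<in> {1..<L2}" using i False \<open>\<not> i < L1\<close> by auto
        then show ?thesis using q(3) False \<open>\<not> i < L1\<close> by (simp add: r_def)
      qed
    qed
  next
    fix i assume i: "i \<in> {1..L1 + L2}"
    show "R i (r (i - 1)) (r i)"
    proof (cases "i \<le> L1")
      case True then show ?thesis using p i by (auto simp: r_def)
    next
      case False
      then have "i - L1 \<in> {1..L2}" using i by auto
      from q(4)[rule_format, OF this] have "R (L1 + (i - L1)) (q (i - L1 - 1)) (q (i - L1))" .
      moreover have "r (i - 1) = q (i - L1 - 1)"
        using False p q by (cases "i = Suc L1") (auto simp: r_def)
      ultimately show ?thesis using False by (simp add: r_def)
    qed
  qed
qed

lemma chain_Suc0[simp]: "chain n (Suc 0) R a b \<longleftrightarrow> R (Suc 0) a b"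
  using chain_one by simp

lemma chain_mult:
  assumes "m \<ge> 1" "L \<ge> 1"
  shows "chain n (m * L) R a b \<longleftrightarrow> chain n m (\<lambda>j x y. chain n L (\<lambda>i. R ((j - 1) * L + i)) x y) a b"
  using assms(1) proof (induction m arbitrary: b rule: dec_induct)
  case base
  then show ?case using chain_one[of n "\<lambda>j x y. chain n L (\<lambda>i. R ((j - 1) * L + i)) x y" a b] by simp
next
  case (step m)
  have "chain n (Suc m * L) R a b = chain n (m * L + L) R a b" by (simp add: add.commute)
  also have "\<dots> \<longleftrightarrow> (\<exists>c\<in>{1..n}. chain n (m*L) R a c \<and> chain n L (\<lambda>i. R (m * L + i)) c b)"
    using step.hyps assms(2) by (intro chain_split) auto
  also have "\<dots> \<longleftrightarrow> (\<exists>c\<in>{1..n}. chain n m (\<lambda>j x y. chain n L (\<lambda>i. R ((j - 1) * L + i)) x y) a c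
       \<and> chain n 1 (\<lambda>i. (\<lambda>j x y. chain n L (\<lambda>i. R ((j - 1) * L + i)) x y) (m + i)) c b)"
    using step.IH by (simp add: chain_one)
  also have "\<dots> \<longleftrightarrow> chain n (m + 1) (\<lambda>j x y. chain n L (\<lambda>i. R ((j - 1) * L + i)) x y) a b"
    using step.hyps by (intro chain_split[symmetric]) auto
  finally show ?case by simp
qed

definition fnl :: "(nat \<Rightarrow> nat \<Rightarrow> nat \<Rightarrow> bool) \<Rightarrow> bool" where
  "fnl R \<longleftrightarrow> (\<forall>j x y z. R j x y \<longrightarrow> R j x z \<longrightarrow> y = z)"

lemma chain_fun:
  assumes "L \<ge> 1" "fnl R" "chain n L R a b" "chain n L R a b'"
  shows "b = b'"
  using assms proof (induction L arbitrary: R b b' rule: nat_induct_at_least)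
  case base
  then show ?case by (auto simp: chain_one fnl_def)
next
  case (Suc L)
  from Suc.prems(2) obtain c where c: "chain n L R a c" "chain n 1 (\<lambda>i. R (L + i)) c b"
    using chain_split[of L 1] Suc.hyps by auto
  from Suc.prems(3) obtain c' where c': "chain n L R a c'" "chain n 1 (\<lambda>i. R (L + i)) c' b'"
    using chain_split[of L 1] Suc.hyps by auto
  have "c = c'" using Suc.IH[OF Suc.prems(1) c(1) c'(1)] by auto
  then show ?case using c c' Suc.prems(1) by (auto simp: chain_one fnl_def)
qed

lemma fnl_chain:
  assumes "fnl R" "L \<ge> 1"
  shows "fnl (\<lambda>j x y. chain n L (\<lambda>i. R (f j + i)) x y)"
proof -
  have "fnl (\<lambda>i. R (f j + i))" for j using assms(1) by (auto simp: fnl_def)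
  show ?thesis unfolding fnl_def
  proof (intro allI impI)
    fix j x y z assume "chain n L (\<lambda>i. R (f j + i)) x y" "chain n L (\<lambda>i. R (f j + i)) x z"
    then show "y = z" using chain_fun[OF assms(2) \<open>fnl (\<lambda>i. R (f j + i))\<close>] by blast
  qed
qed

lemma chain_cong:
  assumes "\<And>j x y. j \<in> {1..L} \<Longrightarrow> x \<in> {1..n} \<Longrightarrow> y \<in> {1..n} \<Longrightarrow> R j x y = R' j x y"
    "a \<in> {1..n}" "b \<in> {1..n}"
  shows "chain n L R a b = chain n L R' a b"
proof -
  have *: "p i \<in> {1..n}" if "p 0 = a" "p L = b" "\<forall>i\<in>{1..<L}. p i \<in> {1..n}" "i \<le> L" for p i
    using that assms(2,3) by (cases "i = 0"; cases "i = L") auto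
  show ?thesis unfolding chain_def
  proof (rule ex_cong1)
    fix p
    show "(p 0 = a \<and> p L = b \<and> (\<forall>i\<in>{1..<L}. p i \<in> {1..n}) \<and> (\<forall>i\<in>{1..L}. R i (p (i - 1)) (p i))) =
          (p 0 = a \<and> p L = b \<and> (\<forall>i\<in>{1..<L}. p i \<in> {1..n}) \<and> (\<forall>i\<in>{1..L}. R' i (p (i - 1)) (p i)))"
    proof (intro conj_cong refl ball_cong)
      fix i assume "p 0 = a" "p L = b" "\<forall>i\<in>{1..<L}. p i \<in> {1..n}" "i \<in> {1..L}"
      then show "R i (p (i - 1)) (p i) = R' i (p (i - 1)) (p i)"
        using *[of p "i - 1"] *[of p i] by (intro assms(1)) auto
    qed
  qed
qed

lemma chain_n1: "chain 1 L R 1 1 \<longleftrightarrow> (\<forall>i\<in>{1..L}. R i 1 1)"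
proof
  assume "chain 1 L R 1 1"
  then obtain p where p: "p 0 = 1" "p L = 1" "\<forall>i\<in>{1..<L}. p i \<in> {1..1}" "\<forall>i\<in>{1..L}. R i (p (i - 1)) (p i)"
    unfolding chain_def by blast
  have "p i = 1" if "i \<le> L" for i using p that by (cases "i = 0"; cases "i = L") auto
  then show "\<forall>i\<in>{1..L}. R i 1 1" using p(4) by fastforce
next
  assume "\<forall>i\<in>{1..L}. R i 1 1"
  then show "chain 1 L R 1 1" unfolding chain_def by (intro exI[of _ "\<lambda>_. 1"]) auto
qed

lemma nth_snoc_le: "i \<le> length cs \<Longrightarrow> (a # cs @ [b]) ! i = (a # cs) ! i"
  by (metis append_Cons length_Cons less_Suc_eq_le nth_append)

lemma nth_snoc_last: "(a # cs @ [b]) ! Suc (length cs) = b"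
  by (simp add: nth_append)

lemma chain_list:
  assumes "m \<ge> 1"
  shows "chain n m R a b \<longleftrightarrow> (\<exists>cs\<in>set (List.n_lists (m - 1) [1..<Suc n]).
      \<forall>j\<in>{1..m}. R j ((a # cs @ [b]) ! (j - 1)) ((a # cs @ [b]) ! j))"
proof
  assume "chain n m R a b"
  then obtain p where p: "p 0 = a" "p m = b" "\<forall>i\<in>{1..<m}. p i \<in> {1..n}" "\<forall>i\<in>{1..m}. R i (p (i - 1)) (p i)"
    unfolding chain_def by blast
  define cs where "cs = map p [1..<m]"
  have len: "length cs = m - 1" by (simp add: cs_def)
  have eq: "(a # cs @ [b]) ! i = p i" if "i \<le> m" for i
  proof (cases "i = 0")
    case True then show ?thesis using p by simp
  next
    case False
    show ?thesis
    proof (cases "i = m")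
      case True
      then show ?thesis using nth_snoc_last[of a cs b] len assms p by simp
    next
      case False
      then have "(a # cs @ [b]) ! i = (a # cs) ! i" using that len by (intro nth_snoc_le) auto
      also have "\<dots> = cs ! (i - 1)" using \<open>i \<noteq> 0\<close> by (cases i) auto
      also have "\<dots> = p i" using \<open>i \<noteq> 0\<close> False that by (simp add: cs_def)
      finally show ?thesis .
    qed
  qed
  have "cs \<in> set (List.n_lists (m - 1) [1..<Suc n])" using p(3) len
    by (auto simp: set_n_lists cs_def)
  moreover have "\<forall>j\<in>{1..m}. R j ((a # cs @ [b]) ! (j - 1)) ((a # cs @ [b]) ! j)"
  proof
    fix j assume j: "j \<in> {1..m}"
    have "R j (p (j - 1)) (p j)" using p(4) j by auto
    then show "R j ((a # cs @ [b]) ! (j - 1)) ((a # cs @ [b]) ! j)"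
    proof -
      have "j - 1 \<le> m" "j \<le> m" using j by auto
      then show ?thesis using eq[of j] eq[of "j - 1"] \<open>R j (p (j - 1)) (p j)\<close> by simp
    qed
  qed
  ultimately show "\<exists>cs\<in>set (List.n_lists (m - 1) [1..<Suc n]).
      \<forall>j\<in>{1..m}. R j ((a # cs @ [b]) ! (j - 1)) ((a # cs @ [b]) ! j)" by blast
next
  assume "\<exists>cs\<in>set (List.n_lists (m - 1) [1..<Suc n]).
      \<forall>j\<in>{1..m}. R j ((a # cs @ [b]) ! (j - 1)) ((a # cs @ [b]) ! j)"
  then obtain cs where cs0: "cs \<in> set (List.n_lists (m - 1) [1..<Suc n])" and cs3:
    "\<forall>j\<in>{1..m}. R j ((a # cs @ [b]) ! (j - 1)) ((a # cs @ [b]) ! j)" by blast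
  have cs: "length cs = m - 1" "set cs \<subseteq> {1..n}" "\<forall>j\<in>{1..m}. R j ((a # cs @ [b]) ! (j - 1)) ((a # cs @ [b]) ! j)"
    using cs0 cs3 by (auto simp: set_n_lists atLeastLessThanSuc_atLeastAtMost)
  show "chain n m R a b" unfolding chain_def
  proof (rule exI[of _ "\<lambda>i. (a # cs @ [b]) ! i"], intro conjI ballI)
    show "(a # cs @ [b]) ! m = b" using nth_snoc_last[of a cs b] cs(1) assms by simp
  next
    fix i assume i: "i \<in> {1..<m}"
    then have "(a # cs @ [b]) ! i = cs ! (i - 1)"
      using nth_snoc_le[of i cs a b] cs(1) by (cases i) auto
    moreover have "cs ! (i - 1) \<in> set cs" using i cs(1) by auto
    ultimately show "(a # cs @ [b]) ! i \<in> {1..n}" using cs(2) by auto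
  qed (use cs in auto)
qed

fun andkids :: "'v ac0 \<Rightarrow> 'v ac0 list" where
  "andkids (And xs) = xs"
| "andkids (Const b) = [Const b]"
| "andkids (Lit p v) = [Lit p v]"
| "andkids (Or xs) = [Or xs]"

fun orkids :: "'v ac0 \<Rightarrow> 'v ac0 list" where
  "orkids (Or xs) = xs"
| "orkids (Const b) = [Const b]"
| "orkids (Lit p v) = [Lit p v]"
| "orkids (And xs) = [And xs]"

lemma eval_andkids: "eval \<rho> f = (\<forall>g\<in>set (andkids f). eval \<rho> g)" by (cases f) auto
lemma vars_andkids: "vars f = (\<Union>g\<in>set (andkids f). vars g)" by (cases f) auto
lemma mono_andkids: "monotone_ac0 f = (\<forall>g\<in>set (andkids f). monotone_ac0 g)" by (cases f) auto
lemma fsize_andkids: "fsize f = sum_list (map fsize (andkids f))" by (cases f) auto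
lemma fold_max_ge: "x \<in> set xs \<Longrightarrow> x \<le> fold max xs (z::nat)"
  by (induction xs arbitrary: z) (auto simp del: fold_max_le, meson le_trans max.cobounded1 max.cobounded2 fold_max_le order_refl)

lemma fanin_andkids: "g \<in> set (andkids f) \<Longrightarrow> and_fanin g \<le> and_fanin f \<and> or_fanin g \<le> or_fanin f"
  by (cases f) (auto simp del: fold_max_le intro: fold_max_ge)

lemma eval_orkids: "eval \<rho> f = (\<exists>g\<in>set (orkids f). eval \<rho> g)" by (cases f) auto
lemma vars_orkids: "vars f = (\<Union>g\<in>set (orkids f). vars g)" by (cases f) auto
lemma mono_orkids: "monotone_ac0 f = (\<forall>g\<in>set (orkids f). monotone_ac0 g)" by (cases f) auto
lemma fsize_orkids: "fsize f = sum_list (map fsize (orkids f))" by (cases f) auto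
lemma andkids_fanin: "g \<in> set (andkids f) \<Longrightarrow> and_fanin g \<le> and_fanin f" "g \<in> set (andkids f) \<Longrightarrow> or_fanin g \<le> or_fanin f"
  using fanin_andkids by auto

lemma fanin_orkids: "g \<in> set (orkids f) \<Longrightarrow> and_fanin g \<le> and_fanin f \<and> or_fanin g \<le> or_fanin f"
  by (cases f) (auto simp del: fold_max_le intro: fold_max_ge)

lemma orkids_fanin: "g \<in> set (orkids f) \<Longrightarrow> and_fanin g \<le> and_fanin f" "g \<in> set (orkids f) \<Longrightarrow> or_fanin g \<le> or_fanin f"
  using fanin_orkids by auto

definition andc :: "'v ac0 list \<Rightarrow> 'v ac0" where "andc fs = And (concat (map andkids fs))"
definition orc :: "'v ac0 list \<Rightarrow> 'v ac0" where "orc fs = Or (concat (map orkids fs))"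

lemma eval_andc[simp]: "eval \<rho> (andc fs) = (\<forall>f\<in>set fs. eval \<rho> f)"
proof -
  have "eval \<rho> (andc fs) = (\<forall>f\<in>set fs. \<forall>g\<in>set (andkids f). eval \<rho> g)" unfolding andc_def by auto
  also have "\<dots> = (\<forall>f\<in>set fs. eval \<rho> f)" by (simp only: eval_andkids[symmetric])
  finally show ?thesis .
qed
lemma eval_orc[simp]: "eval \<rho> (orc fs) = (\<exists>f\<in>set fs. eval \<rho> f)"
proof -
  have "eval \<rho> (orc fs) = (\<exists>f\<in>set fs. \<exists>g\<in>set (orkids f). eval \<rho> g)" unfolding orc_def by auto
  also have "\<dots> = (\<exists>f\<in>set fs. eval \<rho> f)" by (simp only: eval_orkids[symmetric])
  finally show ?thesis .
qed
lemma vars_andc[simp]: "vars (andc fs) = (\<Union>f\<in>set fs. vars f)"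
  unfolding andc_def by (induction fs) (auto simp: vars_andkids[symmetric])
lemma vars_orc[simp]: "vars (orc fs) = (\<Union>f\<in>set fs. vars f)"
  unfolding orc_def by (induction fs) (auto simp: vars_orkids[symmetric])
lemma mono_andc[simp]: "monotone_ac0 (andc fs) = (\<forall>f\<in>set fs. monotone_ac0 f)"
proof -
  have "monotone_ac0 (andc fs) = (\<forall>f\<in>set fs. \<forall>g\<in>set (andkids f). monotone_ac0 g)" unfolding andc_def by auto
  also have "\<dots> = (\<forall>f\<in>set fs. monotone_ac0 f)" by (simp only: mono_andkids[symmetric])
  finally show ?thesis .
qed
lemma mono_orc[simp]: "monotone_ac0 (orc fs) = (\<forall>f\<in>set fs. monotone_ac0 f)"
proof -
  have "monotone_ac0 (orc fs) = (\<forall>f\<in>set fs. \<forall>g\<in>set (orkids f). monotone_ac0 g)" unfolding orc_def by auto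
  also have "\<dots> = (\<forall>f\<in>set fs. monotone_ac0 f)" by (simp only: mono_orkids[symmetric])
  finally show ?thesis .
qed
lemma fsize_andc[simp]: "fsize (andc fs) = sum_list (map fsize fs)"
  unfolding andc_def by (induction fs) (auto simp: fsize_andkids[symmetric])
lemma fsize_orc[simp]: "fsize (orc fs) = sum_list (map fsize fs)"
  unfolding orc_def by (induction fs) (auto simp: fsize_orkids[symmetric])
lemma depth_andc: "(\<forall>f\<in>set fs. \<forall>g\<in>set (andkids f). depth g \<le> D) \<Longrightarrow> depth (andc fs) \<le> Suc D"
  unfolding andc_def by simp
lemma depth_orc: "(\<forall>f\<in>set fs. \<forall>g\<in>set (orkids f). depth g \<le> D) \<Longrightarrow> depth (orc fs) \<le> Suc D"
  unfolding orc_def by simp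
lemma length_concat_map: "length (concat (map f xs)) = sum_list (map (\<lambda>x. length (f x)) xs)"
  by (induction xs) auto
lemma and_fanin_andc: "sum_list (map (\<lambda>f. length (andkids f)) fs) \<le> B \<Longrightarrow> (\<forall>f\<in>set fs. and_fanin f \<le> B)
   \<Longrightarrow> and_fanin (andc fs) \<le> B"
  unfolding andc_def by (auto simp: length_concat_map intro: order_trans[OF andkids_fanin(1)] order_trans[OF andkids_fanin(2)]) 
lemma or_fanin_andc: "(\<forall>f\<in>set fs. or_fanin f \<le> B) \<Longrightarrow> or_fanin (andc fs) \<le> B"
  unfolding andc_def by (auto intro: order_trans[OF andkids_fanin(1)] order_trans[OF andkids_fanin(2)])
lemma or_fanin_orc: "sum_list (map (\<lambda>f. length (orkids f)) fs) \<le> B \<Longrightarrow> (\<forall>f\<in>set fs. or_fanin f \<le> B)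
   \<Longrightarrow> or_fanin (orc fs) \<le> B"
  unfolding orc_def by (auto simp: length_concat_map intro: order_trans[OF orkids_fanin(1)] order_trans[OF orkids_fanin(2)]) 
lemma and_fanin_orc: "(\<forall>f\<in>set fs. and_fanin f \<le> B) \<Longrightarrow> and_fanin (orc fs) \<le> B"
  unfolding orc_def by (auto intro: order_trans[OF orkids_fanin(1)] order_trans[OF orkids_fanin(2)])

lemma sum_list_le_const: "(\<forall>x\<in>set xs. f x \<le> (c::nat)) \<Longrightarrow> sum_list (map f xs) \<le> length xs * c"
  by (induction xs) auto

definition ns :: "nat \<Rightarrow> nat list" where "ns n = [1..<Suc n]"

lemma set_ns[simp]: "set (ns n) = {1..n}"
  by (auto simp: ns_def)

lemma length_ns[simp]: "length (ns n) = n" by (simp add: ns_def)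

lemma nlists_iff: "cs \<in> set (List.n_lists t (ns n)) \<longleftrightarrow> length cs = t \<and> set cs \<subseteq> {1..n}"
  by (auto simp: set_n_lists)

declare nth_Cons_pos[simp del]

lemma path_in: "set cs \<subseteq> {1..n} \<Longrightarrow> a \<in> {1..n} \<Longrightarrow> b \<in> {1..n} \<Longrightarrow> i \<le> Suc (length cs)
   \<Longrightarrow> (a # cs @ [b]) ! i \<in> {1..n}"
proof -
  assume "set cs \<subseteq> {1..n}" "a \<in> {1..n}" "b \<in> {1..n}" "i \<le> Suc (length cs)"
  moreover have "(a # cs @ [b]) ! i \<in> set (a # cs @ [b])" using \<open>i \<le> Suc (length cs)\<close> by (intro nth_mem) auto
  ultimately show ?thesis by auto
qed

lemma prefix_in: "set cs \<subseteq> {1..n} \<Longrightarrow> a \<in> {1..n} \<Longrightarrow> i \<le> length cs \<Longrightarrow> (a # cs) ! i \<in> {1..n}"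
proof -
  assume "set cs \<subseteq> {1..n}" "a \<in> {1..n}" "i \<le> length cs"
  moreover have "(a # cs) ! i \<in> set (a # cs)" using \<open>i \<le> length cs\<close> by (intro nth_mem) auto
  ultimately show ?thesis by auto
qed

definition dterm :: "('v ac0 list \<Rightarrow> 'v ac0) \<Rightarrow> nat \<Rightarrow> (nat \<Rightarrow> nat \<Rightarrow> nat \<Rightarrow> 'v ac0) \<Rightarrow> nat \<Rightarrow> nat \<Rightarrow> nat list \<Rightarrow> 'v ac0" where
  "dterm comb m G a b cs = comb (map (\<lambda>j. G j ((a # cs @ [b]) ! (j - 1)) ((a # cs @ [b]) ! j)) (ns m))"

definition dnf :: "('v ac0 list \<Rightarrow> 'v ac0) \<Rightarrow> nat \<Rightarrow> nat \<Rightarrow> (nat \<Rightarrow> nat \<Rightarrow> nat \<Rightarrow> 'v ac0) \<Rightarrow> nat \<Rightarrow> nat \<Rightarrow> 'v ac0" where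
  "dnf comb m n G a b = Or (map (dterm comb m G a b) (List.n_lists (m - 1) (ns n)))"

lemma eval_dnf:
  assumes "\<And>fs. eval \<rho> (comb fs) = (\<forall>f\<in>set fs. eval \<rho> f)" "m \<ge> 1"
  shows "eval \<rho> (dnf comb m n G a b) = chain n m (\<lambda>j x y. eval \<rho> (G j x y)) a b"
  unfolding dnf_def dterm_def chain_list[OF assms(2)] ns_def[symmetric]
  by (simp add: assms(1))

lemma vars_dnf:
  assumes "\<And>fs. vars (comb fs) = (\<Union>f\<in>set fs. vars f)" "a \<in> {1..n}" "b \<in> {1..n}"
    "\<And>j x y. j \<in> {1..m} \<Longrightarrow> x \<in> {1..n} \<Longrightarrow> y \<in> {1..n} \<Longrightarrow> vars (G j x y) \<subseteq> V"
  shows "vars (dnf comb m n G a b) \<subseteq> V"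
proof -
  have H: "vars (G j ((a # cs @ [b]) ! (j - 1)) ((a # cs @ [b]) ! j)) \<subseteq> V"
    if "cs \<in> set (List.n_lists (m - 1) (ns n))" "j \<in> {1..m}" for cs j
  proof -
    have cs: "length cs = m - 1" "set cs \<subseteq> {1..n}" using that(1) by (auto simp: nlists_iff)
    show ?thesis using that(2) cs assms(2,3) by (intro assms(4) path_in) auto
  qed
  show ?thesis unfolding dnf_def dterm_def
  proof (simp add: assms(1) UN_subset_iff, intro ballI)
    fix cs j assume "cs \<in> set (List.n_lists (m - Suc 0) (ns n))" "j \<in> {Suc 0..m}"
    then show "vars (G j ((a # cs @ [b]) ! (j - Suc 0)) ((a # cs @ [b]) ! j)) \<subseteq> V"
      using H[of cs j] by simp
  qed
qed

lemma mono_dnf: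
  assumes "\<And>fs. monotone_ac0 (comb fs) = (\<forall>f\<in>set fs. monotone_ac0 f)" "\<And>j x y. monotone_ac0 (G j x y)"
  shows "monotone_ac0 (dnf comb m n G a b)"
  unfolding dnf_def dterm_def by (simp add: assms)

lemma fsize_dnf:
  assumes "\<And>fs. fsize (comb fs) = sum_list (map fsize fs)" "\<And>j x y. fsize (G j x y) \<le> S"
  shows "fsize (dnf comb m n G a b) \<le> n ^ (m - 1) * (m * S)"
proof -
  have "fsize (dterm comb m G a b cs) \<le> m * S" for cs
  proof -
    have "sum_list (map (\<lambda>j. fsize (G j ((a # cs @ [b]) ! (j - 1)) ((a # cs @ [b]) ! j))) (ns m)) \<le> length (ns m) * S"
      by (rule sum_list_le_const) (simp add: assms(2))
    then show ?thesis by (simp add: dterm_def assms(1) o_def)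
  qed
  then have "fsize (dnf comb m n G a b) \<le> length (List.n_lists (m - 1) (ns n)) * (m * S)"
    unfolding dnf_def by (simp add: o_def sum_list_le_const)
  then show ?thesis by (simp add: length_n_lists)
qed

definition clause :: "nat \<Rightarrow> nat \<Rightarrow> (nat \<Rightarrow> nat \<Rightarrow> nat \<Rightarrow> 'v ac0) \<Rightarrow> nat \<Rightarrow> nat \<Rightarrow> nat \<Rightarrow> nat list \<Rightarrow> 'v ac0 list" where
  "clause m n G a b j cs =
     concat (map (\<lambda>i. map (\<lambda>c. G i ((a # cs) ! (i - 1)) c) (filter (\<lambda>c. c \<noteq> (a # cs) ! i) (ns n))) [1..<j])
     @ (if j < m then map (\<lambda>c. G j ((a # cs) ! (j - 1)) c) (ns n) else [G m ((a # cs) ! (m - 1)) b])"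

definition cnf :: "nat \<Rightarrow> nat \<Rightarrow> (nat \<Rightarrow> nat \<Rightarrow> nat \<Rightarrow> 'v ac0) \<Rightarrow> nat \<Rightarrow> nat \<Rightarrow> 'v ac0" where
  "cnf m n G a b = And (concat (map (\<lambda>j. map (\<lambda>cs. orc (clause m n G a b j cs)) (List.n_lists (j - 1) (ns n))) (ns m)))"

definition cnf_cond :: "nat \<Rightarrow> nat \<Rightarrow> (nat \<Rightarrow> nat \<Rightarrow> nat \<Rightarrow> bool) \<Rightarrow> nat \<Rightarrow> nat \<Rightarrow> bool" where
  "cnf_cond n m E a b \<longleftrightarrow> (\<forall>j\<in>{1..m}. \<forall>cs. length cs = j - 1 \<and> set cs \<subseteq> {1..n} \<longrightarrow>
     ((\<exists>i\<in>{1..<j}. \<exists>c\<in>{1..n}. c \<noteq> (a # cs) ! i \<and> E i ((a # cs) ! (i - 1)) c) \<or>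
      (if j < m then \<exists>c\<in>{1..n}. E j ((a # cs) ! (j - 1)) c else E m ((a # cs) ! (m - 1)) b)))"

lemma setcl: "set (clause m n G a b j cs) = (\<Union>i\<in>{1..<j}. (\<lambda>c. G i ((a # cs) ! (i - 1)) c) ` {c\<in>{1..n}. c \<noteq> (a # cs) ! i}) \<union>
   (if j < m then (\<lambda>c. G j ((a # cs) ! (j - 1)) c) ` {1..n} else {G m ((a # cs) ! (m - 1)) b})"
  unfolding clause_def by auto
lemma bex_img: "(\<exists>x\<in>f ` A. P x) = (\<exists>y\<in>A. P (f y))" by blast
lemma eval_clause: "(\<exists>g\<in>set (clause m n G a b j cs). eval \<rho> g) \<longleftrightarrow>
     ((\<exists>i\<in>{1..<j}. \<exists>c\<in>{1..n}. c \<noteq> (a # cs) ! i \<and> eval \<rho> (G i ((a # cs) ! (i - 1)) c)) \<or>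
      (if j < m then \<exists>c\<in>{1..n}. eval \<rho> (G j ((a # cs) ! (j - 1)) c) else eval \<rho> (G m ((a # cs) ! (m - 1)) b)))"
  unfolding setcl by (cases "j < m") (simp_all only: bex_Un bex_UN bex_img if_True if_False Bex_def mem_Collect_eq conj_assoc singleton_iff ex_simps; blast)+

lemma eval_cnf: "eval \<rho> (cnf m n G a b) = cnf_cond n m (\<lambda>j x y. eval \<rho> (G j x y)) a b"
proof -
  have "eval \<rho> (cnf m n G a b) = (\<forall>j\<in>{1..m}. \<forall>cs\<in>set (List.n_lists (j - 1) (ns n)). \<exists>g\<in>set (clause m n G a b j cs). eval \<rho> g)"
    unfolding cnf_def by simp
  also have "\<dots> = cnf_cond n m (\<lambda>j x y. eval \<rho> (G j x y)) a b"
    by (simp only: cnf_cond_def Ball_def nlists_iff eval_clause)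
  finally show ?thesis .
qed

definition fn_on :: "nat \<Rightarrow> (nat \<Rightarrow> nat \<Rightarrow> nat \<Rightarrow> bool) \<Rightarrow> bool" where
  "fn_on n E \<longleftrightarrow> (\<forall>j x y z. x \<in> {1..n} \<longrightarrow> y \<in> {1..n} \<longrightarrow> z \<in> {1..n} \<longrightarrow> E j x y \<longrightarrow> E j x z \<longrightarrow> y = z)"

lemma nth_Cons_pos': "i \<ge> 1 \<Longrightarrow> (a # cs) ! i = cs ! (i - 1)"
  by (cases i) auto

lemma no_dev:
  assumes fn: "fn_on n E" and a: "a \<in> {1..n}" and cs: "set cs \<subseteq> {1..n}"
    and steps: "\<forall>i\<in>{1..length cs}. E i ((a # cs) ! (i - 1)) ((a # cs) ! i)"
    and j: "j \<le> Suc (length cs)"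
  shows "\<not> (\<exists>i\<in>{1..<j}. \<exists>c\<in>{1..n}. c \<noteq> (a # cs) ! i \<and> E i ((a # cs) ! (i - 1)) c)"
proof
  assume "\<exists>i\<in>{1..<j}. \<exists>c\<in>{1..n}. c \<noteq> (a # cs) ! i \<and> E i ((a # cs) ! (i - 1)) c"
  then obtain i c where i: "i \<in> {1..<j}" and c: "c \<in> {1..n}" "c \<noteq> (a # cs) ! i" "E i ((a # cs) ! (i - 1)) c"
    by blast
  have il: "i \<in> {1..length cs}" using i j by auto
  have "E i ((a # cs) ! (i - 1)) ((a # cs) ! i)" using steps il by blast
  moreover have "(a # cs) ! (i - 1) \<in> {1..n}" "(a # cs) ! i \<in> {1..n}"
    using prefix_in[OF cs a, of "i - 1"] prefix_in[OF cs a, of i] il by auto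
  ultimately have "c = (a # cs) ! i" using fn c unfolding fn_on_def by blast
  then show False using c by blast
qed

lemma cnf_sem:
  assumes m: "m \<ge> 1" and a: "a \<in> {1..n}" and b: "b \<in> {1..n}" and fn: "fn_on n E"
  shows "cnf_cond n m E a b \<longleftrightarrow> chain n m E a b"
proof
  assume C: "cnf_cond n m E a b"
  have ext: "t \<le> m - 1 \<Longrightarrow> \<exists>cs. length cs = t \<and> set cs \<subseteq> {1..n} \<and>
      (\<forall>i\<in>{1..t}. E i ((a # cs) ! (i - 1)) ((a # cs) ! i))" for t
  proof (induction t)
    case 0
    then show ?case by (intro exI[of _ "[]"]) auto
  next
    case (Suc t)
    then obtain cs where cs: "length cs = t" "set cs \<subseteq> {1..n}"
      "\<forall>i\<in>{1..t}. E i ((a # cs) ! (i - 1)) ((a # cs) ! i)" by auto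
    have jm: "Suc t \<in> {1..m}" "Suc t < m" using Suc.prems m by auto
    from C jm(1) cs(1,2) have
      "(\<exists>i\<in>{1..<Suc t}. \<exists>c\<in>{1..n}. c \<noteq> (a # cs) ! i \<and> E i ((a # cs) ! (i - 1)) c) \<or>
       (if Suc t < m then \<exists>c\<in>{1..n}. E (Suc t) ((a # cs) ! (Suc t - 1)) c else E m ((a # cs) ! (m - 1)) b)"
      unfolding cnf_cond_def by auto
    moreover have "\<not> (\<exists>i\<in>{1..<Suc t}. \<exists>c\<in>{1..n}. c \<noteq> (a # cs) ! i \<and> E i ((a # cs) ! (i - 1)) c)"
      using no_dev[OF fn a cs(2)] cs by auto
    ultimately obtain c where c: "c \<in> {1..n}" "E (Suc t) ((a # cs) ! t) c" using jm(2) by auto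
    show ?case
    proof (intro exI[of _ "cs @ [c]"] conjI ballI)
      show "length (cs @ [c]) = Suc t" using cs by simp
      show "set (cs @ [c]) \<subseteq> {1..n}" using cs c by auto
    next
      fix i assume i: "i \<in> {1..Suc t}"
      show "E i ((a # cs @ [c]) ! (i - 1)) ((a # cs @ [c]) ! i)"
      proof (cases "i \<le> t")
        case True
        then show ?thesis using cs i nth_snoc_le[of i cs a c] nth_snoc_le[of "i - 1" cs a c] by auto
      next
        case False
        then have "i = Suc t" using i by auto
        then show ?thesis using c cs nth_snoc_le[of t cs a c] nth_snoc_last[of a cs c] by auto
      qed
    qed
  qed
  obtain cs where cs: "length cs = m - 1" "set cs \<subseteq> {1..n}"
      "\<forall>i\<in>{1..m - 1}. E i ((a # cs) ! (i - 1)) ((a # cs) ! i)" using ext[of "m - 1"] by auto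
  have X: "\<forall>cs. length cs = m - 1 \<and> set cs \<subseteq> {1..n} \<longrightarrow>
     ((\<exists>i\<in>{1..<m}. \<exists>c\<in>{1..n}. c \<noteq> (a # cs) ! i \<and> E i ((a # cs) ! (i - 1)) c) \<or>
      (if m < m then \<exists>c\<in>{1..n}. E m ((a # cs) ! (m - 1)) c else E m ((a # cs) ! (m - 1)) b))"
    using C[unfolded cnf_cond_def] by (rule bspec) (use m in auto)
  from X cs(1,2) have
    "(\<exists>i\<in>{1..<m}. \<exists>c\<in>{1..n}. c \<noteq> (a # cs) ! i \<and> E i ((a # cs) ! (i - 1)) c) \<or>
       (if m < m then \<exists>c\<in>{1..n}. E m ((a # cs) ! (m - 1)) c else E m ((a # cs) ! (m - 1)) b)"
    by blast
  moreover have "\<not> (\<exists>i\<in>{1..<m}. \<exists>c\<in>{1..n}. c \<noteq> (a # cs) ! i \<and> E i ((a # cs) ! (i - 1)) c)"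
    using no_dev[OF fn a cs(2)] cs m by auto
  ultimately have last: "E m ((a # cs) ! (m - 1)) b" by auto
  have "\<forall>j\<in>{1..m}. E j ((a # cs @ [b]) ! (j - 1)) ((a # cs @ [b]) ! j)"
  proof
    fix j assume j: "j \<in> {1..m}"
    show "E j ((a # cs @ [b]) ! (j - 1)) ((a # cs @ [b]) ! j)"
    proof (cases "j < m")
      case True
      then show ?thesis using cs j nth_snoc_le[of j cs a b] nth_snoc_le[of "j - 1" cs a b] by auto
    next
      case False
      then have "j = m" using j by auto
      then show ?thesis using last cs m nth_snoc_le[of "m - 1" cs a b] nth_snoc_last[of a cs b] by auto
    qed
  qed
  moreover have "cs \<in> set (List.n_lists (m - 1) (ns n))" using cs by (simp add: nlists_iff)
  then have "cs \<in> set (List.n_lists (m - 1) [1..<Suc n])" unfolding ns_def .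
  ultimately show "chain n m E a b" unfolding chain_list[OF m] by blast
next
  assume "chain n m E a b"
  then obtain cs0 where cs0: "cs0 \<in> set (List.n_lists (m - 1) [1..<Suc n])"
    and st: "\<forall>j\<in>{1..m}. E j ((a # cs0 @ [b]) ! (j - 1)) ((a # cs0 @ [b]) ! j)"
    unfolding chain_list[OF m] by blast
  have "cs0 \<in> set (List.n_lists (m - 1) (ns n))" using cs0 unfolding ns_def .
  then have cs0': "length cs0 = m - 1" "set cs0 \<subseteq> {1..n}" by (simp_all add: nlists_iff)
  define P where "P = a # cs0 @ [b]"
  have Pin: "i \<le> m \<Longrightarrow> P ! i \<in> {1..n}" for i
    unfolding P_def using path_in[OF cs0'(2) a b] cs0'(1) m by auto
  have P0: "P ! 0 = a" and Pm: "P ! m = b"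
    unfolding P_def using nth_snoc_last[of a cs0 b] cs0'(1) m by auto
  show "cnf_cond n m E a b" unfolding cnf_cond_def
  proof (intro ballI allI impI)
    fix j cs assume j: "j \<in> {1..m}" and cs: "length cs = j - 1 \<and> set cs \<subseteq> {1..n}"
    show "(\<exists>i\<in>{1..<j}. \<exists>c\<in>{1..n}. c \<noteq> (a # cs) ! i \<and> E i ((a # cs) ! (i - 1)) c) \<or>
       (if j < m then \<exists>c\<in>{1..n}. E j ((a # cs) ! (j - 1)) c else E m ((a # cs) ! (m - 1)) b)"
    proof (cases "\<exists>i. i \<in> {1..<j} \<and> (a # cs) ! i \<noteq> P ! i")
      case True
      then obtain i0 where i0: "i0 \<in> {1..<j}" "(a # cs) ! i0 \<noteq> P ! i0"
        and least: "\<forall>i<i0. \<not> (i \<in> {1..<j} \<and> (a # cs) ! i \<noteq> P ! i)"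
        using exists_least_iff[of "\<lambda>i. i \<in> {1..<j} \<and> (a # cs) ! i \<noteq> P ! i"] by blast
      have eqprev: "(a # cs) ! (i0 - 1) = P ! (i0 - 1)"
      proof (cases "i0 - 1 = 0")
        case True then show ?thesis using P0 by simp
      next
        case False then show ?thesis using least i0 by auto
      qed
      have "E i0 (P ! (i0 - 1)) (P ! i0)" using st i0 j unfolding P_def by auto
      moreover have "P ! i0 \<in> {1..n}" using Pin i0 j by auto
      ultimately show ?thesis using i0 eqprev by metis
    next
      case False
      then have eq: "i < j \<Longrightarrow> (a # cs) ! i = P ! i" for i using P0 by (cases "i = 0") auto
      show ?thesis
      proof (cases "j < m")
        case True
        have "E j (P ! (j - 1)) (P ! j)" using st j unfolding P_def by auto
        moreover have "P ! j \<in> {1..n}" using Pin j by auto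
        ultimately show ?thesis using True eq[of "j - 1"] j by auto
      next
        case False
        then have "j = m" using j by auto
        have "E m (P ! (m - 1)) (P ! m)" using st m unfolding P_def by auto
        then show ?thesis using \<open>j = m\<close> eq[of "m - 1"] m Pm by auto
      qed
    qed
  qed
qed

lemma ns_Suc: "ns (Suc m) = ns m @ [Suc m]" by (simp add: ns_def)
lemma ns_0[simp]: "ns 0 = []" by (simp add: ns_def)

lemma sum_list_map_concat: "sum_list (map f (concat xss)) = sum_list (map (\<lambda>xs. sum_list (map f xs)) xss)"
  by (induction xss) auto

lemma sum_list_mult_right: "sum_list (map (\<lambda>x. f x * (c::nat)) xs) = sum_list (map f xs) * c"
  by (induction xs) (auto simp: algebra_simps)

lemma bound1:
  assumes "n \<ge> (1::nat)"
  shows "sum_list (map (\<lambda>j. n ^ (j - 1) * ((j - 1) * (n - 1) + n)) (ns m)) \<le> m * n ^ m"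
proof (induction m)
  case 0 then show ?case by simp
next
  case (Suc m)
  obtain n' where n: "n = Suc n'" using assms by (cases n) auto
  have "sum_list (map (\<lambda>j. n ^ (j - 1) * ((j - 1) * (n - 1) + n)) (ns (Suc m)))
     = sum_list (map (\<lambda>j. n ^ (j - 1) * ((j - 1) * (n - 1) + n)) (ns m)) + n ^ m * (m * (n - 1) + n)"
    by (simp add: ns_Suc)
  also have "\<dots> \<le> m * n ^ m + n ^ m * (m * (n - 1) + n)" using Suc.IH by simp
  also have "\<dots> = Suc m * n ^ Suc m" unfolding n by (simp add: algebra_simps)
  finally show ?case .
qed

lemma bound2:
  assumes "n \<ge> (2::nat)"
  shows "sum_list (map (\<lambda>j. n ^ (j - 1)) (ns m)) + 1 \<le> n ^ m"
proof (induction m)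
  case 0 then show ?case by simp
next
  case (Suc m)
  have "sum_list (map (\<lambda>j. n ^ (j - 1)) (ns (Suc m))) + 1 = sum_list (map (\<lambda>j. n ^ (j - 1)) (ns m)) + 1 + n ^ m"
    by (simp add: ns_Suc)
  also have "\<dots> \<le> n ^ m + n ^ m" using Suc.IH by simp
  also have "\<dots> \<le> n * n ^ m" using assms by (simp add: mult_2[symmetric] mult_right_mono del: mult_2)
  finally show ?case by simp
qed

lemma length_filter_neq: "x \<in> {1..n} \<Longrightarrow> length (filter (\<lambda>c. c \<noteq> x) (ns n)) = n - 1"
proof -
  assume x: "x \<in> {1..n}"
  have "distinct (ns n)" by (simp add: ns_def)
  then have "length (filter (\<lambda>c. c \<noteq> x) (ns n)) = card ({c. c \<noteq> x} \<inter> {1..n})"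
    by (simp add: distinct_length_filter)
  also have "{c. c \<noteq> x} \<inter> {1..n} = {1..n} - {x}" by auto
  also have "card \<dots> = n - 1" using x by simp
  finally show ?thesis .
qed

lemma length_clause:
  assumes "length cs = j - 1" "set cs \<subseteq> {1..n}" "n \<ge> 1"
  shows "length (clause m n G a b j cs) \<le> (j - 1) * (n - 1) + n"
proof -
  have "sum_list (map (\<lambda>i. length (filter (\<lambda>c. c \<noteq> (a # cs) ! i) (ns n))) [1..<j]) \<le> length [1..<j] * (n - 1)"
  proof (rule sum_list_le_const, intro ballI)
    fix i assume "i \<in> set [1..<j]"
    then have i: "i - 1 < length cs" "i \<ge> 1" using assms by auto
    then have "cs ! (i - 1) \<in> set cs" by simp
    then have "(a # cs) ! i \<in> {1..n}" using assms(2) nth_Cons_pos'[OF i(2), of a cs] by auto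
    then show "length (filter (\<lambda>c. c \<noteq> (a # cs) ! i) (ns n)) \<le> n - 1" by (simp add: length_filter_neq)
  qed
  then show ?thesis unfolding clause_def using assms(3) by (auto simp: length_concat_map o_def)
qed

lemma clause_elem:
  assumes "g \<in> set (clause m n G a b j cs)" "j \<in> {1..m}" "length cs = j - 1" "set cs \<subseteq> {1..n}"
    "a \<in> {1..n}" "b \<in> {1..n}"
  shows "\<exists>i\<in>{1..m}. \<exists>x\<in>{1..n}. \<exists>y\<in>{1..n}. g = G i x y"
proof -
  have pin: "i \<le> j - 1 \<Longrightarrow> (a # cs) ! i \<in> {1..n}" for i using prefix_in[OF assms(4,5)] assms(3) by auto
  from assms(1) show ?thesis unfolding setcl
  proof (elim UnE)
    assume "g \<in> (\<Union>i\<in>{1..<j}. (\<lambda>c. G i ((a # cs) ! (i - 1)) c) ` {c \<in> {1..n}. c \<noteq> (a # cs) ! i})"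
    then obtain i c where "i \<in> {1..<j}" "c \<in> {1..n}" "g = G i ((a # cs) ! (i - 1)) c" by blast
    then show ?thesis using pin[of "i - 1"] assms(2) by (intro bexI[of _ i] bexI[of _ "(a # cs) ! (i - 1)"] bexI[of _ c]) auto
  next
    assume g: "g \<in> (if j < m then (\<lambda>c. G j ((a # cs) ! (j - 1)) c) ` {1..n} else {G m ((a # cs) ! (m - 1)) b})"
    show ?thesis
    proof (cases "j < m")
      case True
      then obtain c where "c \<in> {1..n}" "g = G j ((a # cs) ! (j - 1)) c" using g by auto
      then show ?thesis using pin[of "j - 1"] assms(2) by (intro bexI[of _ j] bexI[of _ "(a # cs) ! (j - 1)"] bexI[of _ c]) auto
    next
      case False
      then have "j = m" "g = G m ((a # cs) ! (m - 1)) b" using g assms(2) by auto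
      then show ?thesis using pin[of "j - 1"] assms(2,6) by (intro bexI[of _ m] bexI[of _ "(a # cs) ! (m - 1)"] bexI[of _ b]) auto
    qed
  qed
qed

lemma andkids_cnf: "andkids (cnf m n G a b) = concat (map (\<lambda>j. map (\<lambda>cs. orc (clause m n G a b j cs)) (List.n_lists (j - 1) (ns n))) (ns m))"
  by (simp add: cnf_def)

lemma cnf_kid:
  assumes "f \<in> set (andkids (cnf m n G a b))"
  shows "\<exists>j\<in>{1..m}. \<exists>cs. length cs = j - 1 \<and> set cs \<subseteq> {1..n} \<and> f = orc (clause m n G a b j cs)"
proof -
  from assms obtain j cs where "j \<in> set (ns m)" "cs \<in> set (List.n_lists (j - 1) (ns n))" "f = orc (clause m n G a b j cs)"
    unfolding andkids_cnf by auto
  then show ?thesis by (intro bexI[of _ j] exI[of _ cs]) (auto simp: nlists_iff)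
qed

lemma length_andkids_cnf: "length (andkids (cnf m n G a b)) = sum_list (map (\<lambda>j. n ^ (j - 1)) (ns m))"
  unfolding andkids_cnf by (simp add: length_concat_map length_n_lists o_def)

lemma fsize_cnf:
  assumes "\<And>j x y. fsize (G j x y) \<le> S" "n \<ge> 1"
  shows "fsize (cnf m n G a b) \<le> m * n ^ m * S"
proof -
  have cl: "fsize (orc (clause m n G a b j cs)) \<le> ((j - 1) * (n - 1) + n) * S"
    if "cs \<in> set (List.n_lists (j - 1) (ns n))" for j cs
  proof -
    have cs: "length cs = j - 1" "set cs \<subseteq> {1..n}" using that by (auto simp: nlists_iff)
    have "fsize (orc (clause m n G a b j cs)) \<le> length (clause m n G a b j cs) * S"
    proof -
      have "\<forall>x\<in>set (clause m n G a b j cs). fsize x \<le> S" unfolding setcl using assms(1) by auto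
      then have "sum_list (map fsize (clause m n G a b j cs)) \<le> length (clause m n G a b j cs) * S"
        by (rule sum_list_le_const)
      then show ?thesis by simp
    qed
    also have "\<dots> \<le> ((j - 1) * (n - 1) + n) * S" by (rule mult_right_mono[OF length_clause[OF cs assms(2)]]) simp
    finally show ?thesis .
  qed
  have "fsize (cnf m n G a b) = sum_list (map (\<lambda>j. sum_list (map (\<lambda>cs. fsize (orc (clause m n G a b j cs))) (List.n_lists (j - 1) (ns n)))) (ns m))"
    unfolding cnf_def by (simp add: sum_list_map_concat o_def)
  also have "\<dots> \<le> sum_list (map (\<lambda>j. n ^ (j - 1) * ((j - 1) * (n - 1) + n) * S) (ns m))"
  proof (rule sum_list_mono)
    fix j
    have "sum_list (map (\<lambda>cs. fsize (orc (clause m n G a b j cs))) (List.n_lists (j - 1) (ns n)))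
        \<le> length (List.n_lists (j - 1) (ns n)) * (((j - 1) * (n - 1) + n) * S)"
      using cl by (intro sum_list_le_const) auto
    then show "sum_list (map (\<lambda>cs. fsize (orc (clause m n G a b j cs))) (List.n_lists (j - 1) (ns n)))
        \<le> n ^ (j - 1) * ((j - 1) * (n - 1) + n) * S" by (simp add: length_n_lists mult.assoc)
  qed
  also have "\<dots> = sum_list (map (\<lambda>j. n ^ (j - 1) * ((j - 1) * (n - 1) + n)) (ns m)) * S"
    by (rule sum_list_mult_right)
  also have "\<dots> \<le> m * n ^ m * S" using bound1[OF assms(2)] by (rule mult_right_mono) simp
  finally show ?thesis .
qed

lemma clause_elem_any: "g \<in> set (clause m n G a b j cs) \<Longrightarrow> \<exists>i x y. g = G i x y"
  unfolding setcl by (auto split: if_splits)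

lemma vars_cnf:
  assumes "a \<in> {1..n}" "b \<in> {1..n}"
    "\<And>j x y. j \<in> {1..m} \<Longrightarrow> x \<in> {1..n} \<Longrightarrow> y \<in> {1..n} \<Longrightarrow> vars (G j x y) \<subseteq> V"
  shows "vars (cnf m n G a b) \<subseteq> V"
proof -
  have "vars f \<subseteq> V" if f: "f \<in> set (andkids (cnf m n G a b))" for f
  proof -
    obtain j cs where j: "j \<in> {1..m}" "length cs = j - 1" "set cs \<subseteq> {1..n}" "f = orc (clause m n G a b j cs)"
      using cnf_kid[OF f] by blast
    have "vars g \<subseteq> V" if "g \<in> set (clause m n G a b j cs)" for g
      using clause_elem[OF that j(1-3) assms(1,2)] assms(3) by blast
    then show ?thesis using j(4) by auto
  qed
  then show ?thesis using vars_andkids[of "cnf m n G a b"] by blast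
qed

lemma mono_cnf:
  assumes "\<And>j x y. monotone_ac0 (G j x y)"
  shows "monotone_ac0 (cnf m n G a b)"
proof -
  have "monotone_ac0 f" if f: "f \<in> set (andkids (cnf m n G a b))" for f
  proof -
    obtain j cs where j: "f = orc (clause m n G a b j cs)"
      using cnf_kid[OF f] by blast
    have "monotone_ac0 g" if "g \<in> set (clause m n G a b j cs)" for g
      using clause_elem_any[OF that] assms by blast
    then show ?thesis using j by auto
  qed
  then show ?thesis using mono_andkids[of "cnf m n G a b"] by blast
qed

lemma depth_cnf:
  assumes "\<And>j x y. \<forall>h\<in>set (orkids (G j x y)). depth h \<le> D"
  shows "\<forall>f\<in>set (andkids (cnf m n G a b)). depth f \<le> Suc D"
proof
  fix f assume f: "f \<in> set (andkids (cnf m n G a b))"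
  obtain j cs where j: "f = orc (clause m n G a b j cs)"
    using cnf_kid[OF f] by blast
  have "\<forall>h\<in>set (orkids g). depth h \<le> D" if "g \<in> set (clause m n G a b j cs)" for g
    using clause_elem_any[OF that] assms by blast
  then show "depth f \<le> Suc D" using j by (auto intro!: depth_orc)
qed

lemma fanin_cnf:
  assumes "\<And>j x y. and_fanin (G j x y) \<le> W" "\<And>j x y. or_fanin (G j x y) \<le> W"
    "\<And>j x y. length (orkids (G j x y)) \<le> K" "n \<ge> 2" "n ^ m \<le> W" "m * n * K \<le> W"
  shows "and_fanin (cnf m n G a b) \<le> W \<and> or_fanin (cnf m n G a b) \<le> W \<and> length (andkids (cnf m n G a b)) \<le> n ^ m"
proof -
  have len: "length (andkids (cnf m n G a b)) \<le> n ^ m"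
    using length_andkids_cnf[of m n G a b] bound2[OF assms(4), of m] by simp
  have kid: "and_fanin f \<le> W \<and> or_fanin f \<le> W" if f: "f \<in> set (andkids (cnf m n G a b))" for f
  proof -
    obtain j cs where j: "j \<in> {1..m}" "length cs = j - 1" "set cs \<subseteq> {1..n}" "f = orc (clause m n G a b j cs)"
      using cnf_kid[OF f] by blast
    have el: "and_fanin g \<le> W \<and> or_fanin g \<le> W \<and> length (orkids g) \<le> K" if "g \<in> set (clause m n G a b j cs)" for g
      using clause_elem_any[OF that] assms(1-3) by blast
    have "length (clause m n G a b j cs) \<le> (j - 1) * (n - 1) + n"
      using length_clause[OF j(2,3)] assms(4) by simp
    also have "\<dots> \<le> (m - 1) * n + n" using j(1) by (intro add_mono mult_mono) auto
    also have "\<dots> = m * n" using j(1) by (cases m) auto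
    finally have lc: "length (clause m n G a b j cs) \<le> m * n" .
    have "sum_list (map (\<lambda>g. length (orkids g)) (clause m n G a b j cs)) \<le> length (clause m n G a b j cs) * K"
      using el by (intro sum_list_le_const) auto
    also have "\<dots> \<le> m * n * K" using lc by (rule mult_right_mono) simp
    finally have "sum_list (map (\<lambda>g. length (orkids g)) (clause m n G a b j cs)) \<le> W" using assms(6) by simp
    then show ?thesis using el j(4) by (auto intro!: or_fanin_orc and_fanin_orc)
  qed
  have "and_fanin (cnf m n G a b) \<le> W"
  proof -
    have "and_fanin (And (andkids (cnf m n G a b))) \<le> W" using kid len assms(5) by auto
    then show ?thesis by (simp add: cnf_def)
  qed
  moreover have "or_fanin (cnf m n G a b) \<le> W"
  proof -
    have "or_fanin (And (andkids (cnf m n G a b))) \<le> W" using kid by auto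
    then show ?thesis by (simp add: cnf_def)
  qed
  ultimately show ?thesis using len by blast
qed

lemma orkids_dnf: "orkids (dnf comb m n G a b) = map (dterm comb m G a b) (List.n_lists (m - 1) (ns n))"
  by (simp add: dnf_def)

lemma length_orkids_dnf: "length (orkids (dnf comb m n G a b)) = n ^ (m - 1)"
  by (simp add: orkids_dnf length_n_lists)

lemma dterm_elem: "g \<in> set (map (\<lambda>j. G j ((a # cs @ [b]) ! (j - 1)) ((a # cs @ [b]) ! j)) (ns m)) \<Longrightarrow> \<exists>i x y. g = G i x y"
  by auto

lemma depth_dnf_andc:
  assumes "\<And>j x y. \<forall>h\<in>set (andkids (G j x y)). depth h \<le> D"
  shows "\<forall>f\<in>set (orkids (dnf andc m n G a b)). depth f \<le> Suc D"
  unfolding orkids_dnf dterm_def using assms by (auto intro!: depth_andc)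

lemma fanin_dnf_andc:
  assumes "\<And>j x y. and_fanin (G j x y) \<le> W" "\<And>j x y. or_fanin (G j x y) \<le> W"
    "\<And>j x y. length (andkids (G j x y)) \<le> K" "m * K \<le> W" "n ^ (m - 1) \<le> W"
  shows "and_fanin (dnf andc m n G a b) \<le> W \<and> or_fanin (dnf andc m n G a b) \<le> W"
proof -
  have t: "and_fanin (dterm andc m G a b cs) \<le> W \<and> or_fanin (dterm andc m G a b cs) \<le> W" for cs
  proof -
    let ?fs = "map (\<lambda>j. G j ((a # cs @ [b]) ! (j - 1)) ((a # cs @ [b]) ! j)) (ns m)"
    have "sum_list (map (\<lambda>f. length (andkids f)) ?fs) \<le> length ?fs * K"
      using assms(3) by (intro sum_list_le_const) auto
    then have "sum_list (map (\<lambda>f. length (andkids f)) ?fs) \<le> W" using assms(4) by simp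
    then show ?thesis unfolding dterm_def using assms(1,2)
      by (auto intro!: and_fanin_andc or_fanin_andc)
  qed
  have "and_fanin (Or (orkids (dnf andc m n G a b))) \<le> W \<and> or_fanin (Or (orkids (dnf andc m n G a b))) \<le> W"
    using t assms(5) by (auto simp: orkids_dnf length_n_lists)
  then show ?thesis by (simp add: dnf_def)
qed

lemma depth_dnf_And:
  assumes "\<And>j x y. depth (G j x y) \<le> D"
  shows "depth (dnf And m n G a b) \<le> Suc (Suc D)"
  unfolding dnf_def dterm_def using assms by auto

lemma fanin_dnf_And:
  assumes "\<And>j x y. and_fanin (G j x y) \<le> m" "\<And>j x y. or_fanin (G j x y) \<le> B" "n ^ (m - 1) \<le> B"
  shows "and_fanin (dnf And m n G a b) \<le> m \<and> or_fanin (dnf And m n G a b) \<le> B"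
  unfolding dnf_def dterm_def using assms by (auto simp: length_n_lists)

primrec Phi :: "nat \<Rightarrow> nat \<Rightarrow> nat \<Rightarrow> bool \<Rightarrow> nat \<Rightarrow> nat \<Rightarrow> nat \<Rightarrow> pvar ac0" where
  "Phi 0 m n \<sigma> s a b = Lit True (s + 1, a, b)"
| "Phi (Suc l) m n \<sigma> s a b = (if \<sigma> then dnf andc m n (\<lambda>j x y. Phi l m n False (s + (j - 1) * m ^ l) x y) a b
     else cnf m n (\<lambda>j x y. Phi l m n True (s + (j - 1) * m ^ l) x y) a b)"

primrec Psi :: "nat \<Rightarrow> nat \<Rightarrow> nat \<Rightarrow> nat \<Rightarrow> nat \<Rightarrow> nat \<Rightarrow> pvar ac0" where
  "Psi 0 m n s a b = Lit True (s + 1, a, b)"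
| "Psi (Suc l) m n s a b = dnf And m n (\<lambda>j x y. Psi l m n (s + (j - 1) * m ^ l) x y) a b"

lemma vars_block:
  assumes "j \<in> {1..m}"
  shows "{s + (j - 1) * L + 1..s + (j - 1) * L + L} \<times> A \<subseteq> {s + 1..s + m * (L::nat)} \<times> A"
proof -
  obtain j' where j': "j = Suc j'" using assms by (cases j) auto
  have "(j - 1) * L + L = j * L" unfolding j' by simp
  also have "\<dots> \<le> m * L" using assms by simp
  finally show ?thesis by auto
qed

lemma Phi_vars:
  assumes "a \<in> {1..n}" "b \<in> {1..n}"
  shows "vars (Phi l m n \<sigma> s a b) \<subseteq> {s + 1..s + m ^ l} \<times> {1..n} \<times> {1..n}"
  using assms
proof (induction l arbitrary: \<sigma> s a b)
  case 0
  then show ?case by simp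
next
  case (Suc l)
  have ch: "vars (Phi l m n \<sigma>' (s + (j - 1) * m ^ l) x y) \<subseteq> {s + 1..s + m ^ Suc l} \<times> {1..n} \<times> {1..n}"
    if "j \<in> {1..m}" "x \<in> {1..n}" "y \<in> {1..n}" for j x y \<sigma>'
    using subset_trans[OF Suc.IH[OF that(2,3), of \<sigma>' "s + (j - 1) * m ^ l"] vars_block[OF that(1), of s "m ^ l" "{1..n} \<times> {1..n}"]]
    by simp
  show ?case
  proof (cases \<sigma>)
    case True
    then show ?thesis using ch Suc.prems by (simp, intro vars_dnf) auto
  next
    case False
    then show ?thesis using ch Suc.prems by (simp, intro vars_cnf) auto
  qed
qed

lemma Psi_vars:
  assumes "a \<in> {1..n}" "b \<in> {1..n}"
  shows "vars (Psi l m n s a b) \<subseteq> {s + 1..s + m ^ l} \<times> {1..n} \<times> {1..n}"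
  using assms
proof (induction l arbitrary: s a b)
  case 0
  then show ?case by simp
next
  case (Suc l)
  have ch: "vars (Psi l m n (s + (j - 1) * m ^ l) x y) \<subseteq> {s + 1..s + m ^ Suc l} \<times> {1..n} \<times> {1..n}"
    if "j \<in> {1..m}" "x \<in> {1..n}" "y \<in> {1..n}" for j x y
    using subset_trans[OF Suc.IH[OF that(2,3), of "s + (j - 1) * m ^ l"] vars_block[OF that(1), of s "m ^ l" "{1..n} \<times> {1..n}"]]
    by simp
  show ?case using ch Suc.prems by (simp, intro vars_dnf) auto
qed

lemma Phi_mono: "monotone_ac0 (Phi l m n \<sigma> s a b)"
  by (induction l arbitrary: \<sigma> s a b) (auto intro!: mono_dnf mono_cnf)

lemma Psi_mono: "monotone_ac0 (Psi l m n s a b)"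
  by (induction l arbitrary: s a b) (auto intro!: mono_dnf)

lemma Phi_size:
  assumes "n \<ge> 1"
  shows "fsize (Phi l m n \<sigma> s a b) \<le> (m * n ^ m) ^ l"
proof (induction l arbitrary: \<sigma> s a b)
  case 0
  then show ?case by simp
next
  case (Suc l)
  show ?case
  proof (cases \<sigma>)
    case True
    have "fsize (dnf andc m n (\<lambda>j x y. Phi l m n False (s + (j - 1) * m ^ l) x y) a b) \<le> n ^ (m - 1) * (m * (m * n ^ m) ^ l)"
      by (rule fsize_dnf) (simp_all add: Suc.IH)
    then have "fsize (Phi (Suc l) m n \<sigma> s a b) \<le> n ^ (m - 1) * (m * (m * n ^ m) ^ l)" using True by simp
    also have "\<dots> \<le> n ^ m * (m * (m * n ^ m) ^ l)"
      using assms by (intro mult_right_mono power_increasing) auto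
    finally show ?thesis by (simp add: algebra_simps)
  next
    case False
    have "fsize (Phi (Suc l) m n \<sigma> s a b) \<le> m * n ^ m * (m * n ^ m) ^ l"
      using False Suc.IH assms by (simp, intro fsize_cnf) auto
    then show ?thesis by simp
  qed
qed

lemma Psi_size:
  shows "fsize (Psi l m n s a b) \<le> (m * n ^ (m - 1)) ^ l"
proof (induction l arbitrary: s a b)
  case 0
  then show ?case by simp
next
  case (Suc l)
  have "fsize (dnf And m n (\<lambda>j x y. Psi l m n (s + (j - 1) * m ^ l) x y) a b) \<le> n ^ (m - 1) * (m * (m * n ^ (m - 1)) ^ l)"
    by (rule fsize_dnf, simp, rule Suc.IH)
  then have "fsize (Psi (Suc l) m n s a b) \<le> n ^ (m - 1) * (m * (m * n ^ (m - 1)) ^ l)" by simp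
  then show ?case by (simp add: algebra_simps)
qed

lemma Phi_depth:
  "if \<sigma> then \<forall>g\<in>set (orkids (Phi l m n \<sigma> s a b)). depth g \<le> l
   else \<forall>g\<in>set (andkids (Phi l m n \<sigma> s a b)). depth g \<le> l"
proof (induction l arbitrary: \<sigma> s a b)
  case 0
  then show ?case by simp
next
  case (Suc l)
  have F: "\<forall>h\<in>set (andkids (Phi l m n False s' x y)). depth h \<le> l" for s' x y
    using Suc.IH[of False] by simp
  have T: "\<forall>h\<in>set (orkids (Phi l m n True s' x y)). depth h \<le> l" for s' x y
    using Suc.IH[of True] by simp
  show ?case
  proof (cases \<sigma>)
    case True
    then show ?thesis using depth_dnf_andc[OF F] by simp
  next
    case False
    then show ?thesis using depth_cnf[OF T] by simp
  qed
qed

lemma Psi_depth: "depth (Psi l m n s a b) \<le> 2 * l"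
proof (induction l arbitrary: s a b)
  case 0
  then show ?case by simp
next
  case (Suc l)
  have "depth (dnf And m n (\<lambda>j x y. Psi l m n (s + (j - 1) * m ^ l) x y) a b) \<le> Suc (Suc (2 * l))"
    by (rule depth_dnf_And) (simp add: Suc.IH)
  then show ?case by simp
qed

lemma Phi_fanin:
  assumes "n \<ge> 2" "m \<ge> 1"
  shows "and_fanin (Phi l m n \<sigma> s a b) \<le> m * n ^ m \<and> or_fanin (Phi l m n \<sigma> s a b) \<le> m * n ^ m \<and>
    (if \<sigma> then length (orkids (Phi l m n \<sigma> s a b)) \<le> n ^ (m - 1) else length (andkids (Phi l m n \<sigma> s a b)) \<le> n ^ m)"
proof (induction l arbitrary: \<sigma> s a b)
  case 0
  have "1 \<le> n ^ (m - 1)" "1 \<le> n ^ m" using assms by auto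
  then show ?case by simp
next
  case (Suc l)
  have F: "and_fanin (Phi l m n False s' x y) \<le> m * n ^ m \<and> or_fanin (Phi l m n False s' x y) \<le> m * n ^ m
     \<and> length (andkids (Phi l m n False s' x y)) \<le> n ^ m" for s' x y
    using Suc.IH[of False] by simp
  have T: "and_fanin (Phi l m n True s' x y) \<le> m * n ^ m \<and> or_fanin (Phi l m n True s' x y) \<le> m * n ^ m
     \<and> length (orkids (Phi l m n True s' x y)) \<le> n ^ (m - 1)" for s' x y
    using Suc.IH[of True] by simp
  have p1: "n ^ (m - 1) \<le> m * n ^ m"
  proof -
    have "n ^ (m - 1) \<le> n ^ m" using assms by (intro power_increasing) auto
    also have "\<dots> \<le> m * n ^ m" using assms by simp
    finally show ?thesis .
  qed
  have p2: "n ^ m \<le> m * n ^ m" using assms by simp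
  have p3: "m * n * n ^ (m - 1) = m * n ^ m" using assms by (cases m) (simp_all add: algebra_simps)
  show ?case
  proof (cases \<sigma>)
    case True
    have "and_fanin (dnf andc m n (\<lambda>j x y. Phi l m n False (s + (j - 1) * m ^ l) x y) a b) \<le> m * n ^ m \<and>
          or_fanin (dnf andc m n (\<lambda>j x y. Phi l m n False (s + (j - 1) * m ^ l) x y) a b) \<le> m * n ^ m"
      using F p1 by (intro fanin_dnf_andc[where K = "n ^ m"]) auto
    then show ?thesis using True by (simp add: length_orkids_dnf)
  next
    case False
    have "and_fanin (cnf m n (\<lambda>j x y. Phi l m n True (s + (j - 1) * m ^ l) x y) a b) \<le> m * n ^ m \<and>
          or_fanin (cnf m n (\<lambda>j x y. Phi l m n True (s + (j - 1) * m ^ l) x y) a b) \<le> m * n ^ m \<and>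
          length (andkids (cnf m n (\<lambda>j x y. Phi l m n True (s + (j - 1) * m ^ l) x y) a b)) \<le> n ^ m"
      using T p2 p3 assms(1) by (intro fanin_cnf[where K = "n ^ (m - 1)"]) auto
    then show ?thesis using False by simp
  qed
qed

lemma Psi_fanin:
  assumes "n \<ge> 1"
  shows "and_fanin (Psi l m n s a b) \<le> m \<and> or_fanin (Psi l m n s a b) \<le> n ^ m"
proof (induction l arbitrary: s a b)
  case 0
  then show ?case by simp
next
  case (Suc l)
  have "n ^ (m - 1) \<le> n ^ m" using assms by (intro power_increasing) auto
  then show ?case using Suc.IH by (simp, intro fanin_dnf_And) auto
qed

lemma fn_to_fnl: "\<forall>i x y z. \<rho> (i, x, y) \<longrightarrow> \<rho> (i, x, z) \<longrightarrow> y = z \<Longrightarrow> fnl (\<lambda>i x y. \<rho> (s + i, x, y))"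
  unfolding fnl_def by blast

lemma Phi_eval:
  assumes fnR: "\<forall>i x y z. \<rho> (i, x, y) \<longrightarrow> \<rho> (i, x, z) \<longrightarrow> y = z" and m: "m \<ge> 1"
  shows "a \<in> {1..n} \<Longrightarrow> b \<in> {1..n} \<Longrightarrow>
    eval \<rho> (Phi l m n \<sigma> s a b) = chain n (m ^ l) (\<lambda>i x y. \<rho> (s + i, x, y)) a b"
proof (induction l arbitrary: \<sigma> s a b)
  case 0
  then show ?case by (simp add: chain_one)
next
  case (Suc l)
  define L where "L = m ^ l"
  have L1: "L \<ge> 1" using m by (simp add: L_def)
  define R' where "R' = (\<lambda>j x y. chain n L (\<lambda>i x y. \<rho> (s + ((j - 1) * L + i), x, y)) x y)"
  have IH': "eval \<rho> (Phi l m n \<sigma>' (s + (j - 1) * L) x y) = R' j x y"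
    if "x \<in> {1..n}" "y \<in> {1..n}" for \<sigma>' j x y
    using Suc.IH[OF that, of \<sigma>' "s + (j - 1) * L"] by (simp add: R'_def L_def add.assoc)
  have main: "chain n m R' a b = chain n (m ^ Suc l) (\<lambda>i x y. \<rho> (s + i, x, y)) a b"
    using chain_mult[OF m L1, of n "\<lambda>i x y. \<rho> (s + i, x, y)" a b] by (simp add: R'_def L_def)
  have fnR': "fnl R'"
    using fnl_chain[OF fn_to_fnl[OF fnR, of s] L1, where f = "\<lambda>j. (j - 1) * L" and n = n] unfolding R'_def by simp
  show ?case
  proof (cases \<sigma>)
    case True
    have "eval \<rho> (Phi (Suc l) m n \<sigma> s a b) = chain n m (\<lambda>j x y. eval \<rho> (Phi l m n False (s + (j - 1) * L) x y)) a b"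
      using True eval_dnf[OF eval_andc m] by (simp add: L_def)
    also have "\<dots> = chain n m R' a b" by (rule chain_cong) (use IH' Suc.prems in auto)
    finally show ?thesis using main by simp
  next
    case False
    let ?E = "\<lambda>j x y. eval \<rho> (Phi l m n True (s + (j - 1) * L) x y)"
    have fnE: "fn_on n ?E" unfolding fn_on_def
    proof (intro allI impI)
      fix j x y z assume "x \<in> {1..n}" "y \<in> {1..n}" "z \<in> {1..n}" "?E j x y" "?E j x z"
      then show "y = z" using IH' fnR' unfolding fnl_def by metis
    qed
    have "eval \<rho> (Phi (Suc l) m n \<sigma> s a b) = cnf_cond n m ?E a b"
      using False eval_cnf by (simp add: L_def)
    also have "\<dots> = chain n m ?E a b" by (rule cnf_sem[OF m Suc.prems fnE])
    also have "\<dots> = chain n m R' a b" by (rule chain_cong) (use IH' Suc.prems in auto)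
    finally show ?thesis using main by simp
  qed
qed

lemma Psi_eval:
  assumes m: "m \<ge> 1"
  shows "a \<in> {1..n} \<Longrightarrow> b \<in> {1..n} \<Longrightarrow>
    eval \<rho> (Psi l m n s a b) = chain n (m ^ l) (\<lambda>i x y. \<rho> (s + i, x, y)) a b"
proof (induction l arbitrary: s a b)
  case 0
  then show ?case by (simp add: chain_one)
next
  case (Suc l)
  define L where "L = m ^ l"
  have L1: "L \<ge> 1" using m by (simp add: L_def)
  define R' where "R' = (\<lambda>j x y. chain n L (\<lambda>i x y. \<rho> (s + ((j - 1) * L + i), x, y)) x y)"
  have IH': "eval \<rho> (Psi l m n (s + (j - 1) * L) x y) = R' j x y"
    if "x \<in> {1..n}" "y \<in> {1..n}" for j x y
    using Suc.IH[OF that, of "s + (j - 1) * L"] by (simp add: R'_def L_def add.assoc)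
  have main: "chain n m R' a b = chain n (m ^ Suc l) (\<lambda>i x y. \<rho> (s + i, x, y)) a b"
    using chain_mult[OF m L1, of n "\<lambda>i x y. \<rho> (s + i, x, y)" a b] by (simp add: R'_def L_def)
  have ea: "eval \<rho> (And fs) = (\<forall>f\<in>set fs. eval \<rho> f)" for fs by simp
  have "eval \<rho> (Psi (Suc l) m n s a b) = chain n m (\<lambda>j x y. eval \<rho> (Psi l m n (s + (j - 1) * L) x y)) a b"
    using eval_dnf[OF ea m] by (simp add: L_def)
  also have "\<dots> = chain n m R' a b" by (rule chain_cong) (use IH' Suc.prems in auto)
  finally show ?case using main by simp
qed

primrec Tr :: "nat \<Rightarrow> nat \<Rightarrow> nat \<Rightarrow> pvar ac0" where
  "Tr 0 m s = Lit True (s + 1, 1, 1)"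
| "Tr (Suc l) m s = And (map (\<lambda>j. Tr l m (s + (j - 1) * m ^ l)) (ns m))"

lemma Tr_eval:
  assumes m: "m \<ge> 1"
  shows "eval \<rho> (Tr l m s) = chain 1 (m ^ l) (\<lambda>i x y. \<rho> (s + i, x, y)) 1 1"
proof (induction l arbitrary: s)
  case 0
  then show ?case by (simp add: chain_one)
next
  case (Suc l)
  define L where "L = m ^ l"
  have L1: "L \<ge> 1" using m by (simp add: L_def)
  define R' where "R' = (\<lambda>j x y. chain 1 L (\<lambda>i x y. \<rho> (s + ((j - 1) * L + i), x, y)) x y)"
  have main: "chain 1 m R' 1 1 = chain 1 (m ^ Suc l) (\<lambda>i x y. \<rho> (s + i, x, y)) 1 1"
    using chain_mult[OF m L1, of 1 "\<lambda>i x y. \<rho> (s + i, x, y)" 1 1] by (simp add: R'_def L_def)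
  have "eval \<rho> (Tr (Suc l) m s) = (\<forall>j\<in>{1..m}. R' j 1 1)"
    using Suc.IH by (simp add: R'_def L_def add.assoc)
  also have "\<dots> = chain 1 m R' 1 1" by (rule chain_n1[symmetric])
  finally show ?case using main by simp
qed

lemma Tr_vars: "vars (Tr l m s) \<subseteq> {s + 1..s + m ^ l} \<times> {1..1} \<times> {1..1}"
proof (induction l arbitrary: s)
  case 0
  then show ?case by simp
next
  case (Suc l)
  have "vars (Tr l m (s + (j - 1) * m ^ l)) \<subseteq> {s + 1..s + m ^ Suc l} \<times> {1..1} \<times> {1..1}" if "j \<in> {1..m}" for j
    using subset_trans[OF Suc.IH[of "s + (j - 1) * m ^ l"] vars_block[OF that, of s "m ^ l" "{1..1} \<times> {1..1}"]]
    by simp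
  then show ?case by (simp add: UN_subset_iff)
qed

lemma Tr_mono: "monotone_ac0 (Tr l m s)"
  by (induction l arbitrary: s) auto

lemma Tr_size: "fsize (Tr l m s) \<le> m ^ l"
proof (induction l arbitrary: s)
  case 0 then show ?case by simp
next
  case (Suc l)
  have "sum_list (map (\<lambda>j. fsize (Tr l m (s + (j - 1) * m ^ l))) (ns m)) \<le> length (ns m) * m ^ l"
    using Suc.IH by (intro sum_list_le_const) auto
  then show ?case by (simp add: o_def)
qed

lemma Tr_depth: "depth (Tr l m s) \<le> l"
  by (induction l arbitrary: s) auto

lemma fold_max_0: "fold max xs (0::nat) = 0 \<longleftrightarrow> (\<forall>x\<in>set xs. x = 0)"
  using fold_max_le[of xs 0 0] by simp

lemma Tr_fanin: "and_fanin (Tr l m s) \<le> m \<and> or_fanin (Tr l m s) \<le> 0"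
  by (induction l arbitrary: s) (auto simp: fold_max_0)

primrec padO :: "nat \<Rightarrow> 'v ac0 \<Rightarrow> 'v ac0" where
  "padO 0 F = F" | "padO (Suc i) F = Or [padO i F]"
primrec padA :: "nat \<Rightarrow> 'v ac0 \<Rightarrow> 'v ac0" where
  "padA 0 F = F" | "padA (Suc i) F = And [padA i F]"

lemma padO_props:
  "eval \<rho> (padO i F) = eval \<rho> F" "vars (padO i F) = vars F" "monotone_ac0 (padO i F) = monotone_ac0 F"
  "fsize (padO i F) = fsize F" "depth (padO i F) = depth F + i" "and_fanin (padO i F) = and_fanin F"
  "or_fanin F \<le> B \<Longrightarrow> 1 \<le> B \<Longrightarrow> or_fanin (padO i F) \<le> B"
  by (induction i) auto

lemma padA_props:
  "eval \<rho> (padA i F) = eval \<rho> F" "vars (padA i F) = vars F" "monotone_ac0 (padA i F) = monotone_ac0 F"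
  "fsize (padA i F) = fsize F" "depth (padA i F) = depth F + i" "or_fanin (padA i F) = or_fanin F"
  "and_fanin F \<le> B \<Longrightarrow> 1 \<le> B \<Longrightarrow> and_fanin (padA i F) \<le> B"
  by (induction i) auto

lemma sigma_pad:
  assumes "depth F \<le> S" "is_Or F \<or> depth F < S" "S \<ge> 1"
  shows "is_Sigma S (padO (S - depth F) F)"
proof -
  obtain S' where S: "S = Suc S'" using assms(3) by (cases S) auto
  have d: "depth (padO (S - depth F) F) = S" using assms(1) by (simp add: padO_props)
  have o: "is_Or (padO (S - depth F) F)"
  proof (cases "depth F < S")
    case True
    then obtain i where "S - depth F = Suc i" by (cases "S - depth F") auto
    then show ?thesis by simp
  next
    case False
    then show ?thesis using assms by auto
  qed
  show ?thesis using d o unfolding S by simp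
qed

lemma pi_pad:
  assumes "depth F \<le> S" "is_And F \<or> depth F < S" "S \<ge> 1"
  shows "is_Pi S (padA (S - depth F) F)"
proof -
  obtain S' where S: "S = Suc S'" using assms(3) by (cases S) auto
  have d: "depth (padA (S - depth F) F) = S" using assms(1) by (simp add: padA_props)
  have o: "is_And (padA (S - depth F) F)"
  proof (cases "depth F < S")
    case True
    then obtain i where "S - depth F = Suc i" by (cases "S - depth F") auto
    then show ?thesis by simp
  next
    case False
    then show ?thesis using assms by auto
  qed
  show ?thesis using d o unfolding S by simp
qed

lemma eval_cong_vars: "(\<forall>v\<in>vars F. \<rho> v = \<rho>' v) \<Longrightarrow> eval \<rho> F = eval \<rho>' F"
  by (induction F) auto

lemma solves_from:
  assumes "vars F \<subseteq> pmm_vars n k" "n \<ge> 1"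
    "\<And>\<rho>. \<forall>i x y z. \<rho> (i, x, y) \<longrightarrow> \<rho> (i, x, z) \<longrightarrow> y = z \<Longrightarrow> eval \<rho> F = chain n k (\<lambda>i x y. \<rho> (i, x, y)) 1 1"
  shows "solves_sub_pmm n k F"
  unfolding solves_sub_pmm_def
proof (intro conjI allI impI)
  show "vars F \<subseteq> pmm_vars n k" by (rule assms(1))
next
  fix \<rho> assume sp: "sub_perm_input n k \<rho>"
  define \<rho>' where "\<rho>' v = (\<rho> v \<and> v \<in> pmm_vars n k)" for v
  have fn: "\<forall>i x y z. \<rho>' (i, x, y) \<longrightarrow> \<rho>' (i, x, z) \<longrightarrow> y = z"
    using sp unfolding \<rho>'_def pmm_vars_def sub_perm_input_def by blast
  have "eval \<rho> F = eval \<rho>' F" using assms(1) by (intro eval_cong_vars) (auto simp: \<rho>'_def)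
  also have "\<dots> = chain n k (\<lambda>i x y. \<rho>' (i, x, y)) 1 1" using assms(3)[OF fn] .
  also have "\<dots> = pmm_value n k \<rho>'" unfolding chain_def pmm_value_def by blast
  also have "\<dots> = pmm_value n k \<rho>" unfolding pmm_value_def
  proof (intro ex_cong1 conj_cong refl ball_cong)
    fix a i assume a0: "a 0 = 1" and ak: "a k = 1" and ai: "\<forall>j\<in>{1..<k}. a j \<in> {1..n}" and i: "i \<in> {1..k}"
    have "a (i - 1) \<in> {1..n}"
    proof (cases "i - 1 = 0")
      case True then show ?thesis using a0 assms(2) by simp
    next
      case False
      then have "i - 1 \<in> {1..<k}" using i by auto
      then show ?thesis using ai by blast
    qed
    moreover have "a i \<in> {1..n}" using ak ai i assms(2) by (cases "i = k") auto
    ultimately show "\<rho>' (i, a (i - 1), a i) = \<rho> (i, a (i - 1), a i)"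
      using i unfolding \<rho>'_def pmm_vars_def by auto
  qed
  finally show "eval \<rho> F = pmm_value n k \<rho>" .
qed

lemma finish_sigma:
  assumes "monotone_ac0 P" "vars P \<subseteq> pmm_vars n k" "n \<ge> 1"
    "\<And>\<rho>. \<forall>i x y z. \<rho> (i, x, y) \<longrightarrow> \<rho> (i, x, z) \<longrightarrow> y = z \<Longrightarrow> eval \<rho> P = chain n k (\<lambda>i x y. \<rho> (i, x, y)) 1 1"
    "fsize P \<le> Z" "depth P \<le> S" "is_Or P" "S \<ge> 1" "and_fanin P \<le> A" "or_fanin P \<le> B" "1 \<le> B"
  shows "\<exists>F. monotone_ac0 F \<and> solves_sub_pmm n k F \<and> fsize F \<le> Z \<and> is_Sigma S F \<and> and_fanin F \<le> A \<and> or_fanin F \<le> B"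
proof (intro exI conjI)
  let ?F = "padO (S - depth P) P"
  show "monotone_ac0 ?F" using assms(1) by (simp add: padO_props)
  show "solves_sub_pmm n k ?F" using assms(2,3,4) by (intro solves_from) (simp_all add: padO_props)
  show "fsize ?F \<le> Z" using assms(5) by (simp add: padO_props)
  show "is_Sigma S ?F" using assms(6,7,8) by (intro sigma_pad) auto
  show "and_fanin ?F \<le> A" using assms(9) by (simp add: padO_props)
  show "or_fanin ?F \<le> B" using assms(10,11) by (rule padO_props)
qed

lemma finish_pi:
  assumes "monotone_ac0 P" "vars P \<subseteq> pmm_vars n k" "n \<ge> 1"
    "\<And>\<rho>. \<forall>i x y z. \<rho> (i, x, y) \<longrightarrow> \<rho> (i, x, z) \<longrightarrow> y = z \<Longrightarrow> eval \<rho> P = chain n k (\<lambda>i x y. \<rho> (i, x, y)) 1 1"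
    "fsize P \<le> Z" "depth P \<le> S" "is_And P" "S \<ge> 1" "and_fanin P \<le> A" "or_fanin P \<le> B" "1 \<le> A"
  shows "\<exists>F. monotone_ac0 F \<and> solves_sub_pmm n k F \<and> fsize F \<le> Z \<and> is_Pi S F \<and> and_fanin F \<le> A \<and> or_fanin F \<le> B"
proof (intro exI conjI)
  let ?F = "padA (S - depth P) P"
  show "monotone_ac0 ?F" using assms(1) by (simp add: padA_props)
  show "solves_sub_pmm n k ?F" using assms(2,3,4) by (intro solves_from) (simp_all add: padA_props)
  show "fsize ?F \<le> Z" using assms(5) by (simp add: padA_props)
  show "is_Pi S ?F" using assms(6,7,8) by (intro pi_pad) auto
  show "or_fanin ?F \<le> B" using assms(10) by (simp add: padA_props)
  show "and_fanin ?F \<le> A" using assms(9,11) by (rule padA_props)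
qed

lemma depth_Or_orkids: "is_Or P \<Longrightarrow> \<forall>g\<in>set (orkids P). depth g \<le> D \<Longrightarrow> depth P \<le> Suc D"
  by (cases P) auto
lemma depth_And_andkids: "is_And P \<Longrightarrow> \<forall>g\<in>set (andkids P). depth g \<le> D \<Longrightarrow> depth P \<le> Suc D"
  by (cases P) auto

theorem proposition1p3:
  fixes n k d m :: nat
  assumes "n \<ge> 1" and "k \<ge> 1" and "d \<ge> 1"
    and "m ^ d = k"
  shows "(\<exists>F. monotone_ac0 F \<and> solves_sub_pmm n k F \<and> fsize F \<le> k * n ^ (d * m)
              \<and> is_Sigma (2 * d) F \<and> and_fanin F \<le> m \<and> or_fanin F \<le> n ^ m)
       \<and> (\<exists>F. monotone_ac0 F \<and> solves_sub_pmm n k F \<and> fsize F \<le> k * n ^ (d * m)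
              \<and> is_Sigma (d + 1) F \<and> fanin F \<le> m * n ^ m)
       \<and> (\<exists>F. monotone_ac0 F \<and> solves_sub_pmm n k F \<and> fsize F \<le> k * n ^ (d * m)
              \<and> is_Pi (d + 1) F \<and> fanin F \<le> m * n ^ m)"
proof -
  have m: "m \<ge> 1" using assms(2,3,4) by (cases m) (auto simp: power_0_left)
  obtain d' where d: "d = Suc d'" using assms(3) by (cases d) auto
  have szW: "(m * n ^ m) ^ d = k * n ^ (d * m)"
    using assms(4) by (simp add: power_mult_distrib power_mult[symmetric] mult.commute)
  have pv: "{0 + 1..0 + m ^ d} \<times> {1..n} \<times> {1..n} = pmm_vars n k" using assms(4) by (simp add: pmm_vars_def)
  have n1: "(1::nat) \<in> {1..n}" using assms(1) by simp
  have W1: "1 \<le> m * n ^ m" using m assms(1) by simp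
  have part1: "\<exists>F. monotone_ac0 F \<and> solves_sub_pmm n k F \<and> fsize F \<le> k * n ^ (d * m)
              \<and> is_Sigma (2 * d) F \<and> and_fanin F \<le> m \<and> or_fanin F \<le> n ^ m"
  proof (rule finish_sigma)
    let ?P = "Psi d m n 0 1 1"
    show "monotone_ac0 ?P" by (rule Psi_mono)
    show "vars ?P \<subseteq> pmm_vars n k" using Psi_vars[OF n1 n1, of d m 0] pv by simp
    show "n \<ge> 1" by (rule assms(1))
    show "eval \<rho> ?P = chain n k (\<lambda>i x y. \<rho> (i, x, y)) 1 1" for \<rho>
      using Psi_eval[OF m n1 n1, of \<rho> d 0] assms(4) by simp
    have "fsize ?P \<le> (m * n ^ (m - 1)) ^ d" by (rule Psi_size)
    also have "\<dots> \<le> (m * n ^ m) ^ d" using assms(1) by (intro power_mono mult_left_mono power_increasing) auto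
    finally show "fsize ?P \<le> k * n ^ (d * m)" using szW by simp
    show "depth ?P \<le> 2 * d" by (rule Psi_depth)
    show "is_Or ?P" by (simp add: d dnf_def)
    show "2 * d \<ge> 1" using assms(3) by simp
    show "and_fanin ?P \<le> m" "or_fanin ?P \<le> n ^ m" using Psi_fanin[OF assms(1)] by auto
    show "1 \<le> n ^ m" using assms(1) by simp
  qed
  have part2: "\<exists>F. monotone_ac0 F \<and> solves_sub_pmm n k F \<and> fsize F \<le> k * n ^ (d * m)
              \<and> is_Sigma (d + 1) F \<and> and_fanin F \<le> m * n ^ m \<and> or_fanin F \<le> m * n ^ m"
  proof (cases "n \<ge> 2")
    case True
    show ?thesis
    proof (rule finish_sigma)
      let ?P = "Phi d m n True 0 1 1"
      show "monotone_ac0 ?P" by (rule Phi_mono)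
      show "vars ?P \<subseteq> pmm_vars n k" using Phi_vars[OF n1 n1, of d m True 0] pv by simp
      show "n \<ge> 1" by (rule assms(1))
      show "eval \<rho> ?P = chain n k (\<lambda>i x y. \<rho> (i, x, y)) 1 1"
        if "\<forall>i x y z. \<rho> (i, x, y) \<longrightarrow> \<rho> (i, x, z) \<longrightarrow> y = z" for \<rho>
        using Phi_eval[OF that m n1 n1, of d True 0] assms(4) by simp
      show "fsize ?P \<le> k * n ^ (d * m)" using Phi_size[OF assms(1), of d m True 0 1 1] szW by simp
      show "is_Or ?P" by (simp add: d dnf_def)
      then show "depth ?P \<le> d + 1" using Phi_depth[of True d m n 0 1 1] depth_Or_orkids by simp
      show "d + 1 \<ge> 1" by simp
      show "and_fanin ?P \<le> m * n ^ m" "or_fanin ?P \<le> m * n ^ m" using Phi_fanin[OF True m] by auto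
      show "1 \<le> m * n ^ m" by (rule W1)
    qed
  next
    case False
    then have n: "n = 1" using assms(1) by simp
    show ?thesis
    proof (rule finish_sigma)
      let ?P = "Or [Tr d m 0]"
      show "monotone_ac0 ?P" by (simp add: Tr_mono)
      show "vars ?P \<subseteq> pmm_vars n k" using Tr_vars[of d m 0] pv n by simp
      show "n \<ge> 1" by (rule assms(1))
      show "eval \<rho> ?P = chain n k (\<lambda>i x y. \<rho> (i, x, y)) 1 1" for \<rho>
        using Tr_eval[OF m, of \<rho> d 0] assms(4) n by simp
      show "fsize ?P \<le> k * n ^ (d * m)" using Tr_size[of d m 0] assms(4) n by simp
      show "is_Or ?P" by simp
      show "depth ?P \<le> d + 1" using Tr_depth[of d m 0] by simp
      show "d + 1 \<ge> 1" by simp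
      show "and_fanin ?P \<le> m * n ^ m" "or_fanin ?P \<le> m * n ^ m" using Tr_fanin[of d m 0] n m by auto
      show "1 \<le> m * n ^ m" by (rule W1)
    qed
  qed
  have part3: "\<exists>F. monotone_ac0 F \<and> solves_sub_pmm n k F \<and> fsize F \<le> k * n ^ (d * m)
              \<and> is_Pi (d + 1) F \<and> and_fanin F \<le> m * n ^ m \<and> or_fanin F \<le> m * n ^ m"
  proof (cases "n \<ge> 2")
    case True
    show ?thesis
    proof (rule finish_pi)
      let ?P = "Phi d m n False 0 1 1"
      show "monotone_ac0 ?P" by (rule Phi_mono)
      show "vars ?P \<subseteq> pmm_vars n k" using Phi_vars[OF n1 n1, of d m False 0] pv by simp
      show "n \<ge> 1" by (rule assms(1))
      show "eval \<rho> ?P = chain n k (\<lambda>i x y. \<rho> (i, x, y)) 1 1"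
        if "\<forall>i x y z. \<rho> (i, x, y) \<longrightarrow> \<rho> (i, x, z) \<longrightarrow> y = z" for \<rho>
        using Phi_eval[OF that m n1 n1, of d False 0] assms(4) by simp
      show "fsize ?P \<le> k * n ^ (d * m)" using Phi_size[OF assms(1), of d m False 0 1 1] szW by simp
      show "is_And ?P" by (simp add: d cnf_def)
      then show "depth ?P \<le> d + 1" using Phi_depth[of False d m n 0 1 1] depth_And_andkids by simp
      show "d + 1 \<ge> 1" by simp
      show "and_fanin ?P \<le> m * n ^ m" "or_fanin ?P \<le> m * n ^ m" using Phi_fanin[OF True m] by auto
      show "1 \<le> m * n ^ m" by (rule W1)
    qed
  next
    case False
    then have n: "n = 1" using assms(1) by simp
    show ?thesis
    proof (rule finish_pi)
      let ?P = "Tr d m 0"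
      show "monotone_ac0 ?P" by (rule Tr_mono)
      show "vars ?P \<subseteq> pmm_vars n k" using Tr_vars[of d m 0] pv n by simp
      show "n \<ge> 1" by (rule assms(1))
      show "eval \<rho> ?P = chain n k (\<lambda>i x y. \<rho> (i, x, y)) 1 1" for \<rho>
        using Tr_eval[OF m, of \<rho> d 0] assms(4) n by simp
      show "fsize ?P \<le> k * n ^ (d * m)" using Tr_size[of d m 0] assms(4) n by simp
      show "is_And ?P" by (simp add: d)
      show "depth ?P \<le> d + 1" using Tr_depth[of d m 0] by simp
      show "d + 1 \<ge> 1" by simp
      show "and_fanin ?P \<le> m * n ^ m" "or_fanin ?P \<le> m * n ^ m" using Tr_fanin[of d m 0] n m by auto
      show "1 \<le> m * n ^ m" by (rule W1)
    qed
  qed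
  show ?thesis using part1 part2 part3 unfolding fanin_def by auto
qed

end
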